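(* Let $N>20$ be an integer and let $w$ be the weight defined below. Then there are absolute constants $0<c_1\le c_2$, $c_3>0$ (independent of $N$) such that $\int_0^1w=1$, $c_1N\le[w]_{A_1}\le c_2N$, and $\sum_{k=2}^N|I_k|\ge c_3N^2$ with $w(x)>x$ for all $x\in I_k$, $2\le k\le N$; in particular $|\{x\in(1,\infty):w(x)>x\}|\ge c_3N^2$.
   Context: Construction. For $k=2,\dots,N$ let $J_k=[2^k,2^{k+1})$, $I_k=[2^k,2^k+k)$, $L_k=[2^k+k,2^{k+1})$, $\ell_k=(2^k-k)/2$ (half the length of $L_k$) and $c_k=2^k+k+\ell_k$ (the center of $L_k$). For $j=1,\dots,k-1$ set $(L_k^-)^j=[c_k-\ell_k(1-2^{-j}),\,c_k-\ell_k(1-2^{-(j-1)}))$ and $(L_k^+)^j=[c_k+\ell_k(1-2^{-(j-1)}),\,c_k+\ell_k(1-2^{-j}))$, and set $(L_k^-)^k=[2^k+k,\,2^k+k+\ell_k2^{-(k-1)})$, $(L_k^+)^k=[2^{k+1}-\ell_k2^{-(k-1)},\,2^{k+1})$. These intervals, together with $I_k$, partition $J_k$; $|(L_k^\pm)^j|=(2^k-k)2^{-(j+1)}$ for $j<k$ and $|(L_k^\pm)^k|=(2^k-k)2^{-k}$. Define $w_k=2^{k+1}\chi_{I_k}+\sum_{j=1}^k2^j\chi_{(L_k^-)^j\cup(L_k^+)^j}$. Define $w$ on $[0,2^{N+2}]$ by $w(x)=\chi_{[0,4)}(x)+\sum_{k=2}^Nw_k(x)$ for $x\in[0,2^{N+1})$,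 $w(2^{N+1})=2^N$, and $w(x)=w(2^{N+2}-x)$ for $x\in[2^{N+1},2^{N+2}]$, and extend $w$ to $\mathbb{R}$ periodically with period $2^{N+2}$. A weight $w\ge0$ on $\mathbb{R}$ is in $A_1$ if $\frac1{|I|}\int_Iw\le C\operatorname{ess\,inf}_Iw$ for all intervals $I$; $[w]_{A_1}$ is the least such $C$. *)

theory Defs
  imports "HOL-Analysis.Analysis"
begin

text \<open>The intervals of the construction, for k \<ge> 2 and 1 \<le> j \<le> k.\<close>

definition Iint :: "nat \<Rightarrow> real set" where
  "Iint k = {2^k ..< 2^k + real k}"

definition ell :: "nat \<Rightarrow> real" where
  "ell k = (2^k - real k) / 2"

definition ctr :: "nat \<Rightarrow> real" where
  "ctr k = 2^k + real k + ell k"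

definition Lminus :: "nat \<Rightarrow> nat \<Rightarrow> real set" where
  "Lminus k j = (if j < k
     then {ctr k - ell k * (1 - (1/2)^j) ..< ctr k - ell k * (1 - (1/2)^(j-1))}
     else {2^k + real k ..< 2^k + real k + ell k * (1/2)^(k-1)})"

definition Lplus :: "nat \<Rightarrow> nat \<Rightarrow> real set" where
  "Lplus k j = (if j < k
     then {ctr k + ell k * (1 - (1/2)^(j-1)) ..< ctr k + ell k * (1 - (1/2)^j)}
     else {2^(k+1) - ell k * (1/2)^(k-1) ..< 2^(k+1)})"

definition wk :: "nat \<Rightarrow> real \<Rightarrow> real" where
  "wk k x = 2^(k+1) * indicator (Iint k) x
     + (\<Sum>j=1..k. 2^j * indicator (Lminus k j \<union> Lplus k j) x)"

definition wbase :: "nat \<Rightarrow> real \<Rightarrow> real" where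
  "wbase N x = indicator {0..<4} x + (\<Sum>k=2..N. wk k x)"

text \<open>The weight on [0, 2^(N+2)], reflected, extended periodically with period 2^(N+2).\<close>
definition wN :: "nat \<Rightarrow> real \<Rightarrow> real" where
  "wN N x = (let P = (2::real)^(N+2); y = x - P * of_int \<lfloor>x / P\<rfloor> in
     if y < 2^(N+1) then wbase N y
     else if y = 2^(N+1) then 2^N
     else wbase N (P - y))"

definition essinf_on :: "real \<Rightarrow> real \<Rightarrow> (real \<Rightarrow> real) \<Rightarrow> real" where
  "essinf_on a b w = Sup {z. AE x in lborel. x \<in> {a..b} \<longrightarrow> z \<le> w x}"

text \<open>The A_1 constant: least C with average over every interval \<le> C * essinf
  (infinity if there is no such C).\<close>
definition A1_const :: "(real \<Rightarrow> real) \<Rightarrow> ereal" where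
  "A1_const w = Inf {ereal C | C. \<forall>a b. a < b \<longrightarrow>
       (LINT x:{a..b}|lborel. w x) / (b - a) \<le> C * essinf_on a b w}"

end

theory Submission
  imports Defs
begin


lemma wbase_meas[measurable]: "wbase N \<in> borel_measurable borel"
  unfolding wbase_def wk_def Iint_def Lminus_def Lplus_def by measurable

lemma wN_meas[measurable]: "wN N \<in> borel_measurable borel"
  unfolding wN_def Let_def by measurable

lemma pow2_ge_lin: "2 * real k \<le> 2^k + (if k = 0 then 0 else 0) \<or> k = 0"
proof (induction k)
  case 0 then show ?case by simp
next
  case (Suc k)
  show ?case
  proof (cases "k = 0")
    case True then show ?thesis by simp
  next
    case False
    with Suc have "2 * real k \<le> 2^k" by simp
    moreover have "(2::real) \<le> 2^k" using False
      by (metis One_nat_def Suc_leI neq0_conv power_increasing power_one_right one_le_numeral)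
    ultimately show ?thesis by simp
  qed
qed

lemma two_k_le: "k \<ge> 1 \<Longrightarrow> 2 * real k \<le> 2^k"
  using pow2_ge_lin[of k] by auto

lemma k_lt_pow: "real k < 2^k"
  by (metis of_nat_less_numeral_power_cancel_iff less_exp)

lemma ell_ge: "k \<ge> 1 \<Longrightarrow> ell k \<ge> 2^k/4"
  using two_k_le[of k] unfolding ell_def by simp

lemma ell_le: "ell k \<le> 2^k/2"
  unfolding ell_def by simp

lemma ell_pos: "k \<ge> 1 \<Longrightarrow> ell k > 0"
proof -
  assume "k \<ge> 1" then have "ell k \<ge> 2^k/4" by (rule ell_ge)
  moreover have "(2::real)^k > 0" by simp
  ultimately show ?thesis by linarith
qed

lemma ell_mono: "ell k \<le> ell (Suc k)"
  unfolding ell_def using k_lt_pow[of k] by simp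

lemma ctr_eq: "ctr k = 2^k + k + ell k" by (simp add: ctr_def)
lemma ctr_eq2: "2^k + real k + 2 * ell k = 2^(k+1)"
  unfolding ell_def by (simp add: field_simps)

definition rr :: "nat \<Rightarrow> nat \<Rightarrow> real" where
  "rr k j = ell k * (1/2)^(j-1)"

lemma Lminus_eq:
  assumes "1 \<le> j" "j \<le> k"
  shows "Lminus k j = {2^k + k + (if j < k then rr k j / 2 else 0) ..< 2^k + k + rr k j}"
proof -
  obtain i where j: "j = Suc i" using assms by (cases j) auto
  show ?thesis
  proof (cases "j < k")
    case True
    then show ?thesis unfolding Lminus_def rr_def ctr_def j
      by (auto simp: algebra_simps)
  next
    case False
    then have "j = k" using assms by simp
    then show ?thesis unfolding Lminus_def rr_def ctr_def j by auto
  qed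
qed

lemma Lplus_eq:
  assumes "1 \<le> j" "j \<le> k"
  shows "Lplus k j = {2^(k+1) - rr k j ..< 2^(k+1) - (if j < k then rr k j / 2 else 0)}"
proof -
  obtain i where j: "j = Suc i" using assms by (cases j) auto
  have c: "ctr k + ell k = 2^(k+1)" unfolding ctr_def ell_def by simp
  show ?thesis
  proof (cases "j < k")
    case True
    have "ctr k + ell k * (1 - (1/2)^i) = 2^(k+1) - ell k * (1/2)^i"
      using c by (simp add: algebra_simps)
    moreover have "ctr k + ell k * (1 - (1/2)^(Suc i)) = 2^(k+1) - ell k * (1/2)^i / 2"
      using c by (simp add: algebra_simps)
    ultimately show ?thesis using True unfolding Lplus_def rr_def j by auto
  next
    case False
    then have "j = k" using assms by simp
    then show ?thesis unfolding Lplus_def rr_def j by auto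
  qed
qed

lemma rr_pos: "k \<ge> 1 \<Longrightarrow> rr k j > 0"
  unfolding rr_def using ell_pos by simp

lemma rr_le: "rr k j \<le> ell k"
  unfolding rr_def using ell_pos[of k] by (cases "k \<ge> 1") (auto simp: power_le_one mult_left_le ell_def)

lemma rr_1: "rr k 1 = ell k" by (simp add: rr_def)
lemma rr_Suc: "j \<ge> 1 \<Longrightarrow> rr k (Suc j) = rr k j / 2"
  unfolding rr_def by (cases j) auto

lemma two_pow_rr: "j \<ge> 1 \<Longrightarrow> 2^j * rr k j = 2 * ell k"
proof -
  assume "j \<ge> 1"
  then obtain i where "j = Suc i" by (cases j) auto
  then show ?thesis unfolding rr_def by (simp add: power_divide power_one_over field_simps)
qed



lemma ind_nonneg: "0 \<le> (indicator S x :: real)" by (simp add: indicator_def)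

lemma wk_nonneg: "0 \<le> wk k t"
  unfolding wk_def by (intro add_nonneg_nonneg sum_nonneg) (auto simp: indicator_def)

lemma wbase_ge_wk: "k \<in> {2..N} \<Longrightarrow> wk k t \<le> wbase N t"
proof -
  assume k: "k \<in> {2..N}"
  have "wk k t \<le> (\<Sum>k=2..N. wk k t)"
    by (rule member_le_sum) (use k wk_nonneg in auto)
  then show ?thesis unfolding wbase_def by (simp add: indicator_def)
qed

lemma wbase_nonneg: "0 \<le> wbase N t"
  unfolding wbase_def by (intro add_nonneg_nonneg sum_nonneg) (auto simp: indicator_def wk_nonneg)

lemma wbase_ge_I: "2 \<le> k \<Longrightarrow> k \<le> N \<Longrightarrow> t \<in> Iint k \<Longrightarrow> 2^(k+1) \<le> wbase N t"
proof -
  assume a: "2 \<le> k" "k \<le> N" "t \<in> Iint k"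
  have "2^(k+1) \<le> wk k t"
    unfolding wk_def using a(3) by (auto intro!: sum_nonneg simp: indicator_def)
  with wbase_ge_wk[of k N t] a show ?thesis by auto
qed

lemma wbase_ge_L: "2 \<le> k \<Longrightarrow> k \<le> N \<Longrightarrow> 1 \<le> j \<Longrightarrow> j \<le> k \<Longrightarrow> t \<in> Lminus k j \<union> Lplus k j
   \<Longrightarrow> 2^j \<le> wbase N t"
proof -
  assume a: "2 \<le> k" "k \<le> N" "1 \<le> j" "j \<le> k" "t \<in> Lminus k j \<union> Lplus k j"
  have "(2::real)^j = 2^j * indicator (Lminus k j \<union> Lplus k j) t" using a(5) by simp
  also have "\<dots> \<le> (\<Sum>j=1..k. 2^j * indicator (Lminus k j \<union> Lplus k j) t)"
    by (rule member_le_sum) (use a in \<open>auto simp: indicator_def\<close>)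
  also have "\<dots> \<le> wk k t" unfolding wk_def by (simp add: indicator_def)
  finally show ?thesis using wbase_ge_wk[of k N t] a by auto
qed

lemma wbase_left:
  assumes k: "2 \<le> k" "k \<le> N" and j: "1 \<le> j" "j \<le> k"
    and t: "2^k + real k \<le> t" "t < 2^k + real k + rr k j"
  shows "2^j \<le> wbase N t"
  using j t
proof (induction "k - j" arbitrary: j rule: nat_less_induct)
  case 1
  show ?case
  proof (cases "j = k")
    case True
    then have "t \<in> Lminus k j" using Lminus_eq[of j k] 1 by auto
    then show ?thesis using wbase_ge_L[of k N j t] k 1 by auto
  next
    case False
    then have jk: "j < k" using 1 by simp
    show ?thesis
    proof (cases "t < 2^k + real k + rr k (Suc j)")
      case True
      have "2^(Suc j) \<le> wbase N t"
        using 1(1)[rule_format, of "k - Suc j" "Suc j"] jk 1 True by auto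
      moreover have "(2::real)^j \<le> 2^(Suc j)" by simp
      ultimately show ?thesis by linarith
    next
      case False
      then have "t \<in> Lminus k j" using Lminus_eq[of j k] 1 jk rr_Suc[of j k] by auto
      then show ?thesis using wbase_ge_L[of k N j t] k 1 by auto
    qed
  qed
qed

lemma wbase_right:
  assumes k: "2 \<le> k" "k \<le> N" and j: "1 \<le> j" "j \<le> k"
    and t: "2^(k+1) - rr k j \<le> t" "t < 2^(k+1)"
  shows "2^j \<le> wbase N t"
  using j t
proof (induction "k - j" arbitrary: j rule: nat_less_induct)
  case 1
  show ?case
  proof (cases "j = k")
    case True
    then have "t \<in> Lplus k j" using Lplus_eq[of j k] 1 by auto
    then show ?thesis using wbase_ge_L[of k N j t] k 1 by auto
  next
    case False
    then have jk: "j < k" using 1 by simp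
    show ?thesis
    proof (cases "2^(k+1) - rr k (Suc j) \<le> t")
      case True
      have "2^(Suc j) \<le> wbase N t"
        using 1(1)[rule_format, of "k - Suc j" "Suc j"] jk 1 True by auto
      moreover have "(2::real)^j \<le> 2^(Suc j)" by simp
      ultimately show ?thesis by linarith
    next
      case False
      then have "t \<in> Lplus k j" using Lplus_eq[of j k] 1 jk rr_Suc[of j k] by auto
      then show ?thesis using wbase_ge_L[of k N j t] k 1 by auto
    qed
  qed
qed

lemma findj_strict:
  fixes l s :: real
  assumes "0 \<le> s" "s < l" "m \<ge> 1"
  shows "\<exists>j. 1 \<le> j \<and> j \<le> m \<and> s < l * (1/2)^(j-1) \<and> (j = m \<or> l * (1/2)^j \<le> s)"
  using assms(3)
proof (induction m rule: dec_induct)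
  case base
  then show ?case using assms by (intro exI[of _ 1]) auto
next
  case (step m)
  then obtain j where j: "1 \<le> j" "j \<le> m" "s < l * (1/2)^(j-1)" "j = m \<or> l * (1/2)^j \<le> s" by blast
  show ?case
  proof (cases "j < m \<or> l * (1/2)^j \<le> s")
    case True
    then show ?thesis using j by (intro exI[of _ j]) auto
  next
    case False
    then show ?thesis using j by (intro exI[of _ "Suc m"]) auto
  qed
qed

lemma findj_nonstrict:
  fixes l s :: real
  assumes "0 \<le> s" "s \<le> l" "m \<ge> 1"
  shows "\<exists>j. 1 \<le> j \<and> j \<le> m \<and> s \<le> l * (1/2)^(j-1) \<and> (j = m \<or> l * (1/2)^j \<le> s)"
  using assms(3)
proof (induction m rule: dec_induct)
  case base
  then show ?case using assms by (intro exI[of _ 1]) auto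
next
  case (step m)
  then obtain j where j: "1 \<le> j" "j \<le> m" "s \<le> l * (1/2)^(j-1)" "j = m \<or> l * (1/2)^j \<le> s" by blast
  show ?case
  proof (cases "j < m \<or> l * (1/2)^j \<le> s")
    case True
    then show ?thesis using j by (intro exI[of _ j]) auto
  next
    case False
    then show ?thesis using j by (intro exI[of _ "Suc m"]) auto
  qed
qed

lemma PL:
  assumes k: "2 \<le> k" "k \<le> N" and t: "2^k + real k \<le> t" "t < ctr k"
  shows "2^k \<le> wbase N t \<or> ell k \<le> wbase N t * (t - (2^k + real k))"
proof -
  have "t - (2^k + real k) < ell k" using t unfolding ctr_def by simp
  then obtain j where j: "1 \<le> j" "j \<le> k" "t - (2^k + real k) < ell k * (1/2)^(j-1)"
    "j = k \<or> ell k * (1/2)^j \<le> t - (2^k + real k)"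
    using findj_strict[of "t - (2^k + real k)" "ell k" k] t k by auto
  have W: "2^j \<le> wbase N t"
    by (rule wbase_left[OF k j(1,2)]) (use t j in \<open>auto simp: rr_def\<close>)
  show ?thesis
  proof (cases "j = k")
    case True then show ?thesis using W by simp
  next
    case False
    then have s: "ell k * (1/2)^j \<le> t - (2^k + real k)" using j by simp
    have "ell k = 2^j * (ell k * (1/2)^j)" by (simp add: power_one_over)
    also have "\<dots> \<le> wbase N t * (t - (2^k + real k))"
      by (rule mult_mono[OF W s]) (use wbase_nonneg[of N t] ell_pos[of k] k in \<open>auto intro!: mult_nonneg_nonneg\<close>)
    finally show ?thesis by simp
  qed
qed

lemma PR:
  assumes k: "2 \<le> k" "k \<le> N" and t: "ctr k \<le> t" "t < 2^(k+1)"
  shows "2^k \<le> wbase N t \<or> ell k \<le> wbase N t * (2^(k+1) - t)"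
proof -
  have c: "ctr k + ell k = 2^(k+1)" unfolding ctr_def ell_def by simp
  have "2^(k+1) - t \<le> ell k" "0 \<le> 2^(k+1) - t" using t c by auto
  then obtain j where j: "1 \<le> j" "j \<le> k" "2^(k+1) - t \<le> ell k * (1/2)^(j-1)"
    "j = k \<or> ell k * (1/2)^j \<le> 2^(k+1) - t"
    using findj_nonstrict[of "2^(k+1) - t" "ell k" k] k by auto
  have W: "2^j \<le> wbase N t"
    by (rule wbase_right[OF k j(1,2)]) (use t j in \<open>auto simp: rr_def\<close>)
  show ?thesis
  proof (cases "j = k")
    case True then show ?thesis using W by simp
  next
    case False
    then have s: "ell k * (1/2)^j \<le> 2^(k+1) - t" using j by simp
    have "ell k = 2^j * (ell k * (1/2)^j)" by (simp add: power_one_over)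
    also have "\<dots> \<le> wbase N t * (2^(k+1) - t)"
      by (rule mult_mono[OF W s]) (use wbase_nonneg[of N t] ell_pos[of k] k in \<open>auto intro!: mult_nonneg_nonneg\<close>)
    finally show ?thesis by simp
  qed
qed



definition FF :: "nat \<Rightarrow> real \<Rightarrow> real" where
  "FF N y = (if y < 2^(N+1) then wbase N y else if y = 2^(N+1) then 2^N else wbase N (2^(N+2) - y))"

lemma wN_FF: "wN N x = FF N (x - 2^(N+2) * of_int \<lfloor>x / 2^(N+2)\<rfloor>)"
  unfolding wN_def FF_def Let_def by simp

lemma FF_refl: "0 < y \<Longrightarrow> y < 2^(N+2) \<Longrightarrow> FF N (2^(N+2) - y) = FF N y"
  unfolding FF_def by auto

lemma wN_periodic: "wN N (x + of_int n * 2^(N+2)) = wN N x"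
proof -
  have "\<lfloor>(x + of_int n * 2^(N+2)) / 2^(N+2)\<rfloor> = \<lfloor>x / 2^(N+2)\<rfloor> + n"
  proof -
    have "(x + of_int n * 2^(N+2)) / 2^(N+2) = x / 2^(N+2) + of_int n" by (simp add: field_simps)
    then show ?thesis by simp
  qed
  then show ?thesis unfolding wN_FF by (simp add: algebra_simps)
qed

lemma wN_even: "wN N (-x) = wN N x"
proof -
  define P :: real where "P = 2^(N+2)"
  have P: "P > 0" unfolding P_def by simp
  define m where "m = \<lfloor>x / P\<rfloor>"
  define y where "y = x - P * of_int m"
  have y: "0 \<le> y" "y < P"
  proof -
    have "of_int m \<le> x / P" "x / P < of_int m + 1" unfolding m_def by linarith+
    then show "0 \<le> y" "y < P" unfolding y_def using P by (auto simp: field_simps)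
  qed
  show ?thesis
  proof (cases "y = 0")
    case True
    then have x: "x = P * of_int m" unfolding y_def by simp
    have "-x = 0 + of_int (-m) * 2^(N+2)" using x unfolding P_def by simp
    moreover have "x = 0 + of_int m * 2^(N+2)" using x unfolding P_def by simp
    ultimately show ?thesis by (metis wN_periodic)
  next
    case False
    then have yp: "0 < y" using y by simp
    have fl: "\<lfloor>-x / P\<rfloor> = -m - 1"
    proof (subst floor_eq_iff)
      have "x / P = of_int m + y / P" unfolding y_def using P by (simp add: field_simps)
      moreover have "0 < y / P" "y / P < 1" using yp y P by auto
      ultimately show "of_int (- m - 1) \<le> - x / P \<and> - x / P < of_int (- m - 1) + 1" by simp
    qed
    have "wN N (-x) = FF N (-x - P * of_int \<lfloor>-x / P\<rfloor>)" unfolding wN_FF P_def ..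
    also have "\<dots> = FF N (P - y)" unfolding fl y_def by (simp add: algebra_simps)
    also have "\<dots> = FF N y" unfolding P_def by (rule FF_refl) (use yp y in \<open>auto simp: P_def\<close>)
    also have "\<dots> = wN N x" unfolding wN_FF P_def[symmetric] m_def[symmetric] y_def ..
    finally show ?thesis .
  qed
qed

lemma wN_base: "0 \<le> t \<Longrightarrow> t < 2^(N+1) \<Longrightarrow> wN N t = wbase N t"
proof -
  assume t: "0 \<le> t" "t < 2^(N+1)"
  have "\<lfloor>t / 2^(N+2)\<rfloor> = 0" using t by (simp add: floor_eq_iff)
  then show ?thesis unfolding wN_FF FF_def using t by simp
qed

lemma wN_H: "wN N (2^(N+1)) = 2^N"
proof -
  have "\<lfloor>(2::real)^(N+1) / 2^(N+2)\<rfloor> = 0" by (simp add: floor_eq_iff)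
  then show ?thesis unfolding wN_FF FF_def by simp
qed

lemma wN_refl: "wN N (of_int q * 2^(N+2) - x) = wN N x"
proof -
  have "of_int q * (2::real)^(N+2) - x = -x + of_int q * 2^(N+2)" by simp
  then show ?thesis using wN_periodic[of N "-x" q] wN_even by metis
qed



lemma findk:
  fixes t :: real
  assumes "2 \<le> n" "4 \<le> t" "t < 2^(n+1)"
  shows "\<exists>k. 2 \<le> k \<and> k \<le> n \<and> 2^k \<le> t \<and> t < 2^(k+1)"
  using assms(1,3)
proof (induction n rule: dec_induct)
  case base then show ?case using assms(2) by (intro exI[of _ 2]) auto
next
  case (step n)
  show ?case
  proof (cases "t < 2^(n+1)")
    case True then show ?thesis using step by force
  next
    case False then show ?thesis using step by (intro exI[of _ "Suc n"]) auto
  qed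
qed

lemma block_ge2:
  assumes k: "2 \<le> k" "k \<le> N" and t: "2^k \<le> t" "t < 2^(k+1)"
  shows "2 \<le> wbase N t"
proof -
  have c: "ctr k = 2^k + real k + rr k 1" "2^(k+1) - rr k 1 = ctr k"
    unfolding ctr_def rr_1 ell_def by (auto simp: field_simps)
  consider "t < 2^k + real k" | "2^k + real k \<le> t" "t < ctr k" | "ctr k \<le> t" by linarith
  then show ?thesis
  proof cases
    case 1
    then have "t \<in> Iint k" using t unfolding Iint_def by auto
    then have "2^(k+1) \<le> wbase N t" using wbase_ge_I k by blast
    moreover have "(2::real) \<le> 2^(k+1)" using k by (metis one_le_power power_Suc le_add2 Suc_eq_plus1 mult_le_cancel_left1 one_le_numeral order_trans zero_less_numeral self_le_power zero_neq_numeral nat_less_le power_one_right power_increasing)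
    ultimately show ?thesis by linarith
  next
    case 2
    then show ?thesis using wbase_left[of k N 1 t] k c by simp
  next
    case 3
    then show ?thesis using wbase_right[of k N 1 t] k c t by simp
  qed
qed

lemma wbase_ge1:
  assumes N: "2 \<le> N" and t: "0 \<le> t" "t < 2^(N+1)"
  shows "1 \<le> wbase N t"
proof (cases "t < 4")
  case True
  then show ?thesis unfolding wbase_def using t
    by (auto intro!: sum_nonneg simp: wk_nonneg indicator_def)
next
  case False
  then obtain k where "2 \<le> k" "k \<le> N" "2^k \<le> t" "t < 2^(k+1)" using findk[OF N _ t(2)] by auto
  then show ?thesis using block_ge2[of k N t] by simp
qed

lemma wN_ge1:
  assumes N: "2 \<le> N"
  shows "1 \<le> wN N x"
proof -
  define P :: real where "P = 2^(N+2)"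
  have P: "P > 0" unfolding P_def by simp
  define m where "m = \<lfloor>x / P\<rfloor>"
  define y where "y = x - P * of_int m"
  have y: "0 \<le> y" "y < P"
  proof -
    have "of_int m \<le> x / P" "x / P < of_int m + 1" unfolding m_def by linarith+
    then show "0 \<le> y" "y < P" unfolding y_def using P by (auto simp: field_simps)
  qed
  have w: "wN N x = FF N y" unfolding wN_FF y_def P_def m_def ..
  have "(1::real) \<le> 2^N" by simp
  then show ?thesis unfolding w FF_def using wbase_ge1[OF N] y unfolding P_def by auto
qed

lemma wN_nonneg: "2 \<le> N \<Longrightarrow> 0 \<le> wN N x"
  using wN_ge1[of N x] by simp

definition Wb :: "nat \<Rightarrow> real" where
  "Wb N = 2^N + 1 + (\<Sum>k=2..N. 2^(k+1) + (\<Sum>j=1..k. 2^j))"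

lemma wbase_le: "wbase N t \<le> 1 + (\<Sum>k=2..N. 2^(k+1) + (\<Sum>j=1..k. 2^j))"
  unfolding wbase_def wk_def
  by (intro add_mono sum_mono) (auto simp: indicator_def)

lemma wN_le: "wN N x \<le> Wb N"
proof -
  have "wN N x = FF N (x - 2^(N+2) * of_int \<lfloor>x / 2^(N+2)\<rfloor>)" by (rule wN_FF)
  moreover have "FF N y \<le> Wb N" for y
  proof -
    have "(0::real) \<le> (\<Sum>k=2..N. 2^(k+1) + (\<Sum>j=1..k. 2^j))" by (intro sum_nonneg add_nonneg_nonneg) auto
    then have B: "2^N \<le> Wb N" unfolding Wb_def by linarith
    have A: "wbase N z \<le> Wb N" for z
      using wbase_le[of N z] zero_le_power[of "2::real" N] unfolding Wb_def by linarith
    show ?thesis unfolding FF_def using A B by auto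
  qed
  ultimately show ?thesis by simp
qed



lemma meas_Icc: "l \<le> u \<Longrightarrow> measure lebesgue {l..u::real} = u - l"
  by simp

lemma lmeas_Ico_Icc: "{p..<q::real} \<inter> {a..b} \<in> lmeasurable"
  by (rule bounded_set_imp_lmeasurable) auto

lemma meas_ivl: "measure lebesgue ({p..<q::real} \<inter> {a..b}) \<le> max 0 (min b q - max a p)"
proof (cases "max a p \<le> min b q")
  case True
  have "measure lebesgue ({p..<q::real} \<inter> {a..b}) \<le> measure lebesgue {max a p .. min b q}"
    by (rule measure_mono_fmeasurable) (auto intro: lmeas_Ico_Icc)
  then show ?thesis using True by simp
next
  case False
  then have "{p..<q::real} \<inter> {a..b} = {}" by auto
  then show ?thesis by simp
qed

lemma meas_nonneg: "0 \<le> measure lebesgue (S::real set)" by simp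

lemma bdd_set_integrable:
  fixes f :: "real \<Rightarrow> real"
  assumes [measurable]: "f \<in> borel_measurable borel" and b: "\<And>x. \<bar>f x\<bar> \<le> B"
  shows "set_integrable lborel {a..b} f"
  unfolding set_integrable_def
proof (rule integrableI_bounded_set[where A="{a..b}" and B=B])
  show "{a..b} \<in> sets lborel" by simp
  show "(\<lambda>x. indicator {a..b} x *\<^sub>R f x) \<in> borel_measurable lborel" by measurable
  show "emeasure lborel {a..b} < \<infinity>" by (simp add: emeasure_lborel_Icc_eq)
  show "AE x in lborel. x \<in> {a..b} \<longrightarrow> norm (indicator {a..b} x *\<^sub>R f x) \<le> B"
    using b by auto
  show "AE x in lborel. x \<notin> {a..b} \<longrightarrow> indicator {a..b} x *\<^sub>R f x = 0" by auto
qed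

lemma bdd_integrable_on:
  fixes f :: "real \<Rightarrow> real"
  assumes "f \<in> borel_measurable borel" and "\<And>x. \<bar>f x\<bar> \<le> B"
  shows "f integrable_on {a..b}" "(LINT x:{a..b}|lborel. f x) = integral {a..b} f"
  using set_borel_integral_eq_integral[OF bdd_set_integrable[OF assms]] by auto

lemma wN_integrable: "2 \<le> N \<Longrightarrow> wN N integrable_on {a..b}"
  by (rule bdd_integrable_on(1)[where B="Wb N"]) (use wN_le wN_ge1 in \<open>auto simp: abs_le_iff\<close>, smt (verit) wN_ge1)

lemma wN_LINT: "2 \<le> N \<Longrightarrow> (LINT x:{a..b}|lborel. wN N x) = integral {a..b} (wN N)"
  by (rule bdd_integrable_on(2)[where B="Wb N"]) (use wN_le wN_ge1 in \<open>auto simp: abs_le_iff\<close>, smt (verit) wN_ge1)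

lemma wbase_integrable: "wbase N integrable_on {a..b}"
proof (rule bdd_integrable_on(1)[where B="1 + (\<Sum>k=2..N. 2^(k+1) + (\<Sum>j=1..k. 2^j))"])
  show "wbase N \<in> borel_measurable borel" by simp
  fix x show "\<bar>wbase N x\<bar> \<le> 1 + (\<Sum>k=2..N. 2^(k+1) + (\<Sum>j=1..k. 2^j))"
    using wbase_le[of N x] wbase_nonneg[of N x] by simp
qed

definition mu :: "real set \<Rightarrow> real \<Rightarrow> real \<Rightarrow> real" where
  "mu S a b = measure lebesgue (S \<inter> {a..b})"

definition Sk :: "nat \<Rightarrow> real \<Rightarrow> real \<Rightarrow> real" where
  "Sk k a b = 2^(k+1) * mu (Iint k) a b + (\<Sum>j=1..k. 2^j * (mu (Lminus k j) a b + mu (Lplus k j) a b))"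

definition Wup :: "nat \<Rightarrow> real \<Rightarrow> real" where
  "Wup N x = indicator {0..<4} x + (\<Sum>k=2..N. 2^(k+1) * indicator (Iint k) x
     + (\<Sum>j=1..k. 2^j * (indicator (Lminus k j) x + indicator (Lplus k j) x)))"

lemma ind_has_int: "S \<inter> {a..b} \<in> lmeasurable \<Longrightarrow> (indicator S has_integral mu S a b) {a..b}"
  unfolding mu_def using integrable_on_indicator[of S "{a..b}"] integral_indicator[of S "{a..b}"]
  by (metis has_integral_integral)

lemma Lminus_lm: "Lminus k j \<inter> {a..b} \<in> lmeasurable"
  unfolding Lminus_def by (auto intro: lmeas_Ico_Icc)
lemma Lplus_lm: "Lplus k j \<inter> {a..b} \<in> lmeasurable"
  unfolding Lplus_def by (auto intro: lmeas_Ico_Icc)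
lemma Iint_lm: "Iint k \<inter> {a..b} \<in> lmeasurable"
  unfolding Iint_def by (auto intro: lmeas_Ico_Icc)

lemma Wup_has_int: "(Wup N has_integral (mu {0..<4} a b + (\<Sum>k=2..N. Sk k a b))) {a..b}"
  unfolding Wup_def Sk_def
  by (intro has_integral_add has_integral_sum has_integral_mult_right ind_has_int finite_atLeastAtMost
        Lminus_lm Lplus_lm Iint_lm lmeas_Ico_Icc)

lemma wbase_le_Wup: "wbase N x \<le> Wup N x"
  unfolding wbase_def Wup_def wk_def
  by (intro add_mono sum_mono order_refl mult_left_mono) (auto simp: indicator_def)

lemma int_wbase_le: "integral {a..b} (wbase N) \<le> mu {0..<4} a b + (\<Sum>k=2..N. Sk k a b)"
proof -
  have "integral {a..b} (wbase N) \<le> integral {a..b} (Wup N)"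
    by (rule integral_le) (use wbase_integrable has_integral_integrable[OF Wup_has_int] wbase_le_Wup in auto)
  then show ?thesis using Wup_has_int integral_unique by metis
qed



lemma PB_gen:
  fixes a b t v W q0 q1 l rho m :: real
  assumes t: "a \<le> t" "t \<le> b" and m: "0 \<le> m" "m \<le> max 0 (min b q1 - max a q0)"
    and v: "0 \<le> v" and W: "0 \<le> W" and l: "q1 - q0 \<le> rho * l" and rho: "1 \<le> rho"
    and G: "v \<le> 16 * W \<or> v * l \<le> 16 * W * (q0 - t) \<or> v * l \<le> 16 * W * (t - q1)"
  shows "v * m \<le> 16 * rho * W * (b-a)"
proof -
  have mba: "m \<le> b - a" using m t by auto
  have R: "0 \<le> 16 * rho * W * (b-a)" using rho W t by simp
  consider "v \<le> 16 * W" | "v * l \<le> 16 * W * (q0 - t)" | "v * l \<le> 16 * W * (t - q1)" using G by blast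
  then show ?thesis
  proof cases
    case 1
    have "v * m \<le> v * (b-a)" using mba v by (rule mult_left_mono)
    also have "\<dots> \<le> (16 * W) * (b-a)" using 1 t by (intro mult_right_mono) auto
    also have "\<dots> \<le> rho * (16 * W * (b-a))" using mult_right_mono[of 1 rho "16 * W * (b-a)"] rho W t by simp
    finally show ?thesis by (simp add: algebra_simps)
  next
    case 2
    show ?thesis
    proof (cases "m = 0")
      case True then show ?thesis using R by simp
    next
      case False
      then have "0 < min b q1 - max a q0" using m by auto
      then have bq: "q0 < b" and mq: "m \<le> q1 - q0" using m by auto
      have "v * m \<le> v * (q1-q0)" using mq v by (rule mult_left_mono)
      also have "\<dots> \<le> v * (rho * l)" using l v by (rule mult_left_mono)
      also have "\<dots> = rho * (v * l)" by simp
      also have "\<dots> \<le> rho * (16 * W * (q0-t))" using 2 rho by (intro mult_left_mono) auto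
      also have "\<dots> \<le> rho * (16 * W * (b-a))" using bq t rho W by (intro mult_left_mono) auto
      finally show ?thesis by (simp add: algebra_simps)
    qed
  next
    case 3
    show ?thesis
    proof (cases "m = 0")
      case True then show ?thesis using R by simp
    next
      case False
      then have "0 < min b q1 - max a q0" using m by auto
      then have bq: "a < q1" and mq: "m \<le> q1 - q0" using m by auto
      have "v * m \<le> v * (q1-q0)" using mq v by (rule mult_left_mono)
      also have "\<dots> \<le> v * (rho * l)" using l v by (rule mult_left_mono)
      also have "\<dots> = rho * (v * l)" by simp
      also have "\<dots> \<le> rho * (16 * W * (t-q1))" using 3 rho by (intro mult_left_mono) auto
      also have "\<dots> \<le> rho * (16 * W * (b-a))" using bq t rho W by (intro mult_left_mono) auto
      finally show ?thesis by (simp add: algebra_simps)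
    qed
  qed
qed



lemma pow2_mono: "j \<le> k \<Longrightarrow> (2::real)^j \<le> 2^k" by (rule power_increasing) auto

lemma rr_half: "2 \<le> j \<Longrightarrow> 1 \<le> k \<Longrightarrow> rr k j \<le> ell k / 2"
proof -
  assume j: "2 \<le> j" and k: "1 \<le> k"
  have "(1/2::real)^(j-1) \<le> (1/2)^1" using j by (intro power_decreasing) auto
  then show ?thesis unfolding rr_def using ell_pos[OF k] by (simp add: mult_left_le)
qed

lemma ctr_ell: "ctr k + ell k = 2^(k+1)" unfolding ctr_def ell_def by simp

lemma ctr_pred: "1 \<le> k \<Longrightarrow> ctr (k-1) = 2^k - ell (k-1)"
proof -
  assume "1 \<le> k"
  then have "(k - 1) + 1 = k" by simp
  then show ?thesis using ctr_ell[of "k-1"] by (metis add_diff_cancel_right')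
qed

lemma ell_pred: "2 \<le> k \<Longrightarrow> ell (k-1) \<ge> 2^k / 8"
proof -
  assume k: "2 \<le> k"
  have "ell (k-1) \<ge> 2^(k-1)/4" using ell_ge[of "k-1"] k by simp
  moreover have "(2::real)^k = 2 * 2^(k-1)" using k by (metis Suc_diff_1 le_trans one_le_numeral not_less_eq_eq power_Suc zero_less_Suc less_le_trans numerals(2) Suc_le_eq)
  ultimately show ?thesis by simp
qed

lemma big_j: "\<not> (2::real)^j \<le> 16 \<Longrightarrow> 5 \<le> j"
proof (rule ccontr)
  assume a: "\<not> (2::real)^j \<le> 16" "\<not> 5 \<le> j"
  then have "j \<le> 4" by simp
  then have "(2::real)^j \<le> 2^4" by (rule pow2_mono)
  then show False using a by simp
qed

lemma wN_lt: "0 \<le> t \<Longrightarrow> t < 2^(k+1) \<Longrightarrow> k \<le> N \<Longrightarrow> wN N t = wbase N t"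
proof -
  assume a: "0 \<le> t" "t < 2^(k+1)" "k \<le> N"
  have "(2::real)^(k+1) \<le> 2^(N+1)" using a(3) by (intro pow2_mono) simp
  then have "t < 2^(N+1)" using a(2) by linarith
  then show ?thesis using wN_base a(1) by blast
qed

lemma mono_helper: "0 \<le> W \<Longrightarrow> c \<le> W * s \<Longrightarrow> s \<le> s' \<Longrightarrow> c \<le> W * (s'::real)"
  by (meson mult_left_mono order_trans)

lemma le_W: "1 \<le> W \<Longrightarrow> 0 \<le> x \<Longrightarrow> 0 \<le> c \<Longrightarrow> c * x \<le> c * W * (x::real)"
proof -
  assume a: "1 \<le> W" "0 \<le> x" "0 \<le> c"
  have "c * 1 \<le> c * W" using a by (intro mult_left_mono) auto
  then have "c * 1 * x \<le> c * W * x" using a by (intro mult_right_mono) auto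
  then show ?thesis by simp
qed

lemma G_Lm:
  assumes N: "2 \<le> N" and k: "2 \<le> k" "k \<le> N" and j: "1 \<le> j" "j \<le> k"
    and t: "0 \<le> t" "t \<le> 2^(N+1)"
  defines "q0 \<equiv> 2^k + real k + (if j < k then rr k j / 2 else 0)"
    and "q1 \<equiv> 2^k + real k + rr k j"
  shows "2^j \<le> 16 * wN N t \<or> 2 * ell k \<le> 16 * wN N t * (q0 - t) \<or> 2 * ell k \<le> 16 * wN N t * (t - q1)"
proof -
  let ?W = "wN N t"
  let ?e = "2^k + real k :: real"
  have W1: "1 \<le> ?W" using wN_ge1[OF N] .
  have ellp: "0 < ell k" using ell_pos k by simp
  have ellle: "ell k \<le> 2^k/2" by (rule ell_le)
  have rrp: "0 < rr k j" using rr_pos k by simp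
  have rrle: "rr k j \<le> ell k" by (rule rr_le)
  have q0: "?e \<le> q0" "q0 \<le> q1" using rrp unfolding q0_def q1_def by auto
  have ctr: "ctr k = ?e + ell k" unfolding ctr_def by simp
  have ctr2: "ctr k + ell k = 2^(k+1)" by (rule ctr_ell)
  have rrj: "2^j * rr k j = 2 * ell k" using two_pow_rr j by simp
  show ?thesis
  proof (cases "(2::real)^j \<le> 16")
    case True then show ?thesis using W1 by simp
  next
    case False
    then have j5: "5 \<le> j" by (rule big_j)
    have rrh: "rr k j \<le> ell k / 2" using rr_half[of j k] j5 k by simp
    consider "t < 2^k" | "2^k \<le> t" "t < ?e" | "?e \<le> t" "t < q1" | "q1 \<le> t" "t < ctr k" | "ctr k \<le> t"
      by linarith
    then show ?thesis
    proof cases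
      case 1
      show ?thesis
      proof (cases "2^k - t \<ge> 2^k / 16")
        case True
        have "2 * ell k \<le> 16 * (2^k - t)" using True ellle by simp
        also have "\<dots> \<le> 16 * (q0 - t)" using q0 by simp
        also have "\<dots> \<le> 16 * ?W * (q0 - t)" using W1 q0 1 by (intro le_W) auto
        finally show ?thesis by simp
      next
        case False
        have k1: "2 \<le> k - 1" "k - 1 \<le> N" using j5 j k by auto
        have kk: "k - 1 + 1 = k" using k by simp
        have A: "ctr (k-1) = 2^k - ell (k-1)" using ctr_pred[of k] k by simp
        have B: "ell (k-1) \<ge> 2^k / 8" using ell_pred[of k] k by simp
        have "(0::real) \<le> 2^k" by simp
        then have "ctr (k-1) \<le> t" using A B False by linarith
        moreover have "t < 2^(k-1+1)" using 1 kk by simp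
        ultimately have PRk: "2^(k-1) \<le> wbase N t \<or> ell (k-1) \<le> wbase N t * (2^(k-1+1) - t)"
          using PR[OF k1] by blast
        have Wb: "?W = wbase N t" using wN_lt[of t k N] t 1 k by simp
        have p: "(2::real)^k = 2 * 2^(k-1)"
        proof -
          obtain i where "k = Suc i" using k by (cases k) auto
          then show ?thesis by simp
        qed
        show ?thesis
        proof (cases "2^(k-1) \<le> wbase N t")
          case True
          have "(2::real)^j \<le> 2^k" using j(2) by (rule pow2_mono)
          also have "\<dots> = 2 * 2^(k-1)" by (rule p)
          also have "\<dots> \<le> 2 * wbase N t" by (intro mult_left_mono True) simp
          also have "\<dots> \<le> 16 * ?W" using Wb wbase_nonneg[of N t] by linarith
          finally have "2^j \<le> 16 * ?W" .
          then show ?thesis by simp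
        next
          case False
          then have "ell (k-1) \<le> ?W * (2^k - t)" using PRk Wb kk by simp
          then have X: "2^k / 8 \<le> ?W * (2^k - t)" using ell_pred[of k] k by simp
          have "2^k/8 \<le> ?W * (q0 - t)" using mono_helper[OF _ X, of "q0 - t"] W1 q0 by auto
          then have "2 * ell k \<le> 16 * (?W * (q0 - t))" using ellle zero_le_power[of "2::real" k] by linarith
          then show ?thesis by (simp add: mult.assoc)
        qed
      qed
    next
      case 2
      then have "t \<in> Iint k" unfolding Iint_def by simp
      then have "2^(k+1) \<le> wbase N t" using wbase_ge_I k by blast
      moreover have "t < 2 * 2^k" using 2 k_lt_pow[of k] by linarith
      then have "t < 2^(k+1)" by simp
      then have "?W = wbase N t" using wN_lt[of t k N] t k by simp
      moreover have "(2::real)^j \<le> 2^(k+1)" using j by (intro pow2_mono) simp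
      ultimately have "2^j \<le> ?W" by linarith
      then have "2^j \<le> 16 * ?W" using W1 by linarith
      then show ?thesis by simp
    next
      case 3
      have "2^j \<le> wbase N t" using wbase_left[OF k j, of t] 3 unfolding q1_def by simp
      moreover have "t < 2^(k+1)" using 3 q1_def rrle ctr ctr2 by simp
      then have "?W = wbase N t" using wN_lt[of t k N] t k by simp
      ultimately have "2^j \<le> ?W" by linarith
      then have "2^j \<le> 16 * ?W" using W1 by linarith
      then show ?thesis by simp
    next
      case 4
      have tk: "t < 2^(k+1)" using 4 ctr2 ellp by simp
      have Wb: "?W = wbase N t" using wN_lt[of t k N] t k tk by simp
      have "2^k \<le> wbase N t \<or> ell k \<le> wbase N t * (t - ?e)" using PL[OF k, of t] 4 q0 by simp
      then show ?thesis
      proof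
        assume "2^k \<le> wbase N t"
        then have "2^j \<le> ?W" using pow2_mono[OF j(2)] Wb by linarith
        then have "2^j \<le> 16 * ?W" using W1 by linarith
        then show ?thesis by simp
      next
        assume A: "ell k \<le> wbase N t * (t - ?e)"
        show ?thesis
        proof (cases "t - q1 \<le> rr k j")
          case True
          then have Y: "t - ?e \<le> 2 * rr k j" unfolding q1_def by simp
          have "ell k \<le> ?W * (2 * rr k j)" using mono_helper[OF _ A[folded Wb] Y] W1 by auto
          then have Z: "ell k \<le> 2 * (?W * rr k j)" by (simp add: algebra_simps)
          then have "2 * ell k \<le> 16 * (?W * rr k j)" using ellp by linarith
          then have "2^j * rr k j \<le> (16 * ?W) * rr k j" using rrj by (simp add: algebra_simps)
          then have "2^j \<le> 16 * ?W" by (rule mult_right_le_imp_le) (use rrp in simp)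
          then show ?thesis by simp
        next
          case False
          then have Y: "t - ?e \<le> 2 * (t - q1)" unfolding q1_def by simp
          have "ell k \<le> ?W * (2 * (t - q1))" using mono_helper[OF _ A[folded Wb] Y] W1 by auto
          then have Z: "ell k \<le> 2 * (?W * (t - q1))" by (simp add: algebra_simps)
          then have "2 * ell k \<le> 16 * (?W * (t - q1))" using ellp by linarith
          then show ?thesis by (simp add: mult.assoc)
        qed
      qed
    next
      case 5
      have "ell k / 2 \<le> t - q1" using 5 rrh ctr unfolding q1_def by simp
      then have "8 * ell k \<le> 16 * (t - q1)" by simp
      then have "2 * ell k \<le> 16 * (t - q1)" using ellp by linarith
      also have "\<dots> \<le> 16 * ?W * (t - q1)" using W1 \<open>ell k / 2 \<le> t - q1\<close> ellp by (intro le_W) auto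
      finally show ?thesis by simp
    qed
  qed
qed



lemma aux_rr:
  fixes r W v l s :: real
  assumes "0 < r" "0 \<le> W" "v * r = 2 * l" "l \<le> W * s" "s \<le> 2 * r"
  shows "v \<le> 16 * W"
proof -
  have "W * s \<le> W * (2 * r)" using assms by (intro mult_left_mono) auto
  then have "l \<le> 2 * (W * r)" using assms by (simp add: algebra_simps)
  then have "v * r \<le> 4 * (W * r)" using assms by linarith
  also have "\<dots> \<le> 16 * (W * r)" using assms by simp
  finally have "v * r \<le> (16 * W) * r" by (simp add: algebra_simps)
  then show ?thesis by (rule mult_right_le_imp_le) (use assms in simp)
qed

lemma aux_far:
  fixes W l s d :: real
  assumes "0 \<le> W" "l \<le> W * s" "s \<le> 2 * d" "0 < l"
  shows "2 * l \<le> 16 * W * d"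
proof -
  have "W * s \<le> W * (2 * d)" using assms by (intro mult_left_mono) auto
  then have "l \<le> 2 * (W * d)" using assms by (simp add: algebra_simps)
  then have "2 * l \<le> 16 * (W * d)" using assms by linarith
  then show ?thesis by (simp add: algebra_simps)
qed

lemma lin16: "l \<le> x \<Longrightarrow> 0 < l \<Longrightarrow> 2*l \<le> 16*(x::real)" by linarith

lemma d1: "(v::real) \<le> w \<Longrightarrow> 1 \<le> w \<Longrightarrow> v \<le> 16 * w" by linarith

lemma G_Lp:
  assumes N: "2 \<le> N" and k: "2 \<le> k" "k \<le> N" and j: "1 \<le> j" "j \<le> k"
    and t: "0 \<le> t" "t \<le> 2^(N+1)"
  defines "q0 \<equiv> 2^(k+1) - rr k j"
    and "q1 \<equiv> 2^(k+1) - (if j < k then rr k j / 2 else 0)"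
  shows "2^j \<le> 16 * wN N t \<or> 2 * ell k \<le> 16 * wN N t * (q0 - t) \<or> 2 * ell k \<le> 16 * wN N t * (t - q1)"
proof -
  let ?W = "wN N t"
  have W1: "1 \<le> ?W" using wN_ge1[OF N] .
  have W0: "0 \<le> ?W" using W1 by simp
  have ellp: "0 < ell k" using ell_pos k by simp
  have ellle: "ell k \<le> 2^k/2" by (rule ell_le)
  have rrp: "0 < rr k j" using rr_pos k by simp
  have rrle: "rr k j \<le> ell k" by (rule rr_le)
  have q0: "q0 \<le> q1" "q1 \<le> 2^(k+1)" using rrp unfolding q0_def q1_def by auto
  have ctr2: "ctr k + ell k = 2^(k+1)" by (rule ctr_ell)
  have rrj: "2^j * rr k j = 2 * ell k" using two_pow_rr j by simp
  have pj: "(2::real)^j \<le> 2^k" using j(2) by (rule pow2_mono)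
  show ?thesis
  proof (cases "(2::real)^j \<le> 16")
    case True then show ?thesis using W1 by simp
  next
    case False
    then have j5: "5 \<le> j" by (rule big_j)
    have rrh: "rr k j \<le> ell k / 2" using rr_half[of j k] j5 k by simp
    consider "t < ctr k" | "ctr k \<le> t" "t < q0" | "q0 \<le> t" "t < 2^(k+1)" | "2^(k+1) \<le> t"
      by linarith
    then show ?thesis
    proof cases
      case 1
      have A: "ell k / 2 \<le> q0 - t" using 1 rrh ctr2 unfolding q0_def by simp
      then have "8 * ell k \<le> 16 * (q0 - t)" by simp
      then have "2 * ell k \<le> 16 * (q0 - t)" using ellp by linarith
      also have "\<dots> \<le> 16 * ?W * (q0 - t)" using W1 A ellp by (intro le_W) auto
      finally show ?thesis by simp
    next
      case 2
      have tk: "t < 2^(k+1)" using 2 q0 by simp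
      have Wb: "?W = wbase N t" using wN_lt[of t k N] t k tk by simp
      have "2^k \<le> wbase N t \<or> ell k \<le> wbase N t * (2^(k+1) - t)" using PR[OF k, of t] 2 tk by simp
      then show ?thesis
      proof
        assume "2^k \<le> wbase N t"
        then have "2^j \<le> ?W" using pj Wb by linarith
        then show ?thesis using d1 W1 by blast
      next
        assume A: "ell k \<le> wbase N t * (2^(k+1) - t)"
        show ?thesis
        proof (cases "q0 - t \<le> rr k j")
          case True
          then have "2^(k+1) - t \<le> 2 * rr k j" unfolding q0_def by simp
          then have "2^j \<le> 16 * ?W" using aux_rr[OF rrp W0 rrj A[folded Wb]] by blast
          then show ?thesis by simp
        next
          case False
          then have "2^(k+1) - t \<le> 2 * (q0 - t)" unfolding q0_def by simp
          then show ?thesis using aux_far[OF W0 A[folded Wb] _ ellp] by blast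
        qed
      qed
    next
      case 3
      have "2^j \<le> wbase N t" using wbase_right[OF k j, of t] 3 unfolding q0_def by simp
      moreover have "?W = wbase N t" using wN_lt[of t k N] t k 3 by simp
      ultimately have "2^j \<le> ?W" by linarith
      then show ?thesis using d1 W1 by blast
    next
      case 4
      show ?thesis
      proof (cases "k = N")
        case True
        then have "t = 2^(N+1)" using 4 t by simp
        then have "?W = 2^k" using wN_H True by simp
        then have "2^j \<le> ?W" using pj by simp
        then show ?thesis using d1 W1 by blast
      next
        case False
        define k' where "k' = k + 1"
        have k': "2 \<le> k'" "k' \<le> N" using k False unfolding k'_def by auto
        have ek: "2^(k+1) + real k' < 2^(k'+1)" using k_lt_pow[of k'] unfolding k'_def by simp
        have tq: "t - 2^(k+1) \<le> t - q1" using q0 by simp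
        have pj': "(2::real)^j \<le> 2^k'" using j unfolding k'_def by (intro pow2_mono) simp
        consider "t < 2^k' + real k'" | "2^k' + real k' \<le> t" "t < ctr k'" | "ctr k' \<le> t" by linarith
        then show ?thesis
        proof cases
          case 1
          then have "t \<in> Iint k'" using 4 unfolding Iint_def k'_def by simp
          then have "2^(k'+1) \<le> wbase N t" using wbase_ge_I k' by blast
          moreover have "?W = wbase N t" using wN_lt[of t k' N] t k' 1 ek unfolding k'_def by simp
          moreover have "(2::real)^k' \<le> 2^(k'+1)" by (intro pow2_mono) simp
          ultimately have "2^j \<le> ?W" using pj' by linarith
          then show ?thesis using d1 W1 by blast
        next
          case 2
          have tk: "t < 2^(k'+1)" using 2 ctr_ell[of k'] ell_pos[of k'] k' by simp
          have Wb: "?W = wbase N t" using wN_lt[of t k' N] t k' tk by simp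
          have "2^k' \<le> wbase N t \<or> ell k' \<le> wbase N t * (t - (2^k' + real k'))"
            using PL[OF k', of t] 2 by simp
          then show ?thesis
          proof
            assume "2^k' \<le> wbase N t"
            then have "2^j \<le> ?W" using pj' Wb by linarith
            then show ?thesis using d1 W1 by blast
          next
            assume A: "ell k' \<le> wbase N t * (t - (2^k' + real k'))"
            have "ell k \<le> ell k'" unfolding k'_def using ell_mono by simp
            then have A': "ell k \<le> ?W * (t - (2^k' + real k'))" using A[folded Wb] by linarith
            have "t - (2^k' + real k') \<le> 2 * (t - q1)" using tq 2 unfolding k'_def by simp
            then show ?thesis using aux_far[OF W0 A' _ ellp] by blast
          qed
        next
          case 3
          have "ctr k' = 2^k' + real k' + ell k'" unfolding ctr_def by simp
          moreover have "ell k \<le> ell k'" unfolding k'_def using ell_mono by simp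
          ultimately have B: "ell k \<le> t - q1" using 3 tq unfolding k'_def by simp
          then have "2 * ell k \<le> 16 * (t - q1)" using ellp by (rule lin16)
          also have "\<dots> \<le> 16 * ?W * (t - q1)" using W1 B ellp by (intro le_W) auto
          finally show ?thesis by simp
        qed
      qed
    qed
  qed
qed



lemma G_I:
  assumes N: "2 \<le> N" and k: "2 \<le> k" "k \<le> N"
    and t: "0 \<le> t" "t \<le> 2^(N+1)"
  shows "2^(k+1) \<le> 16 * wN N t \<or> 2^(k+1) \<le> 16 * wN N t * (2^k - t) \<or> 2^(k+1) \<le> 16 * wN N t * (t - (2^k + real k))"
proof -
  let ?W = "wN N t"
  let ?e = "2^k + real k :: real"
  have W1: "1 \<le> ?W" using wN_ge1[OF N] .
  have W0: "0 \<le> ?W" using W1 by simp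
  have ellp: "0 < ell k" using ell_pos k by simp
  have ellge: "2^k/4 \<le> ell k" using ell_ge k by simp
  have ctr: "ctr k = ?e + ell k" unfolding ctr_def by simp
  have ctr2: "ctr k + ell k = 2^(k+1)" by (rule ctr_ell)
  have p2: "(2::real)^(k+1) = 2 * 2^k" by simp
  have pk: "(0::real) < 2^k" by simp
  show ?thesis
  proof (cases "k = 2")
    case True then show ?thesis using W1 by simp
  next
    case False
    then have k3: "3 \<le> k" using k by simp
    consider "t < 2^k" | "2^k \<le> t" "t < ?e" | "?e \<le> t" "t < ctr k" | "ctr k \<le> t" by linarith
    then show ?thesis
    proof cases
      case 1
      show ?thesis
      proof (cases "2^k - t \<ge> 2^k / 8")
        case True
        then have "2^(k+1) \<le> 16 * (2^k - t)" using p2 by (simp add: right_diff_distrib)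
        also have "\<dots> \<le> 16 * ?W * (2^k - t)" using W1 1 by (intro le_W) auto
        finally show ?thesis by simp
      next
        case False
        have k1: "2 \<le> k - 1" "k - 1 \<le> N" using k3 k by auto
        have kk: "k - 1 + 1 = k" using k by simp
        have A: "ctr (k-1) = 2^k - ell (k-1)" using ctr_pred[of k] k by simp
        have B: "ell (k-1) \<ge> 2^k / 8" using ell_pred[of k] k by simp
        have "ctr (k-1) \<le> t" using A B False pk by linarith
        moreover have "t < 2^(k-1+1)" using 1 kk by simp
        ultimately have PRk: "2^(k-1) \<le> wbase N t \<or> ell (k-1) \<le> wbase N t * (2^(k-1+1) - t)"
          using PR[OF k1] by blast
        have Wb: "?W = wbase N t" using wN_lt[of t k N] t 1 k by simp
        have p: "(2::real)^k = 2 * 2^(k-1)"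
        proof -
          obtain i where "k = Suc i" using k by (cases k) auto
          then show ?thesis by simp
        qed
        show ?thesis
        proof (cases "2^(k-1) \<le> wbase N t")
          case True
          have "(2::real)^(k+1) = 4 * 2^(k-1)" using p p2 by simp
          also have "\<dots> \<le> 4 * wbase N t" by (intro mult_left_mono True) simp
          also have "\<dots> \<le> 16 * ?W" using Wb wbase_nonneg[of N t] by linarith
          finally show ?thesis by simp
        next
          case False
          then have "ell (k-1) \<le> ?W * (2^k - t)" using PRk Wb kk by simp
          then have X: "2^k / 8 \<le> ?W * (2^k - t)" using B by linarith
          then have "2^(k+1) \<le> 16 * (?W * (2^k - t))" using p2 by linarith
          then show ?thesis by (simp add: mult.assoc)
        qed
      qed
    next
      case 2
      then have "t \<in> Iint k" unfolding Iint_def by simp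
      then have "2^(k+1) \<le> wbase N t" using wbase_ge_I k by blast
      moreover have "t < 2 * 2^k" using 2 k_lt_pow[of k] by linarith
      then have "t < 2^(k+1)" by simp
      then have "?W = wbase N t" using wN_lt[of t k N] t k by simp
      ultimately have "2^(k+1) \<le> ?W" by linarith
      then show ?thesis using d1 W1 by blast
    next
      case 3
      have tk: "t < 2^(k+1)" using 3 ctr2 ellp by simp
      have Wb: "?W = wbase N t" using wN_lt[of t k N] t k tk by simp
      have "2^k \<le> wbase N t \<or> ell k \<le> wbase N t * (t - ?e)" using PL[OF k, of t] 3 by simp
      then show ?thesis
      proof
        assume "2^k \<le> wbase N t"
        then have "2^k \<le> ?W" using Wb by simp
        then have "2^(k+1) \<le> 16 * ?W" using p2 pk by linarith
        then show ?thesis by simp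
      next
        assume A: "ell k \<le> wbase N t * (t - ?e)"
        then have "2^k/4 \<le> ?W * (t - ?e)" using Wb ellge by simp
        then have "2^(k+1) \<le> 16 * (?W * (t - ?e))" using p2 pk by linarith
        then show ?thesis by (simp add: mult.assoc)
      qed
    next
      case 4
      have B: "2^k/4 \<le> t - ?e" using 4 ctr ellge by simp
      have nn: "0 \<le> t - ?e" using B pk by argo
      have "16 * (t - ?e) = 16 * t - 16 * ?e" by (simp add: right_diff_distrib)
      then have "2^(k+1) \<le> 16 * (t - ?e)" using B p2 pk by argo
      also have "16 * (t - ?e) \<le> 16 * ?W * (t - ?e)" using W1 nn by (intro le_W) auto
      finally show ?thesis by simp
    qed
  qed
qed



lemma mu_le: "mu {p..<q} a b \<le> max 0 (min b q - max a p)"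
  unfolding mu_def by (rule meas_ivl)

lemma mu_nonneg: "0 \<le> mu S a b" unfolding mu_def by simp

lemma mu_le_len: "a \<le> b \<Longrightarrow> mu {p..<q} a b \<le> b - a"
  using mu_le[of p q a b] by simp

lemma mu_le_len2: "p \<le> q \<Longrightarrow> mu {p..<q} a b \<le> q - p"
  using mu_le[of p q a b] by simp

lemma mu_zero: "b \<le> p \<or> q \<le> a \<Longrightarrow> mu {p..<q} a b = 0"
  using mu_le[of p q a b] mu_nonneg[of "{p..<q}" a b] by auto

lemma PB_Lm:
  assumes N: "2 \<le> N" and k: "2 \<le> k" "k \<le> N" and j: "1 \<le> j" "j \<le> k"
    and t: "a \<le> t" "t \<le> b" "0 \<le> t" "t \<le> 2^(N+1)"
  shows "2^j * mu (Lminus k j) a b \<le> 16 * wN N t * (b - a)"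
proof -
  define q0 where "q0 = 2^k + real k + (if j < k then rr k j / 2 else 0)"
  define q1 where "q1 = 2^k + real k + rr k j"
  have L: "Lminus k j = {q0..<q1}" unfolding q0_def q1_def using Lminus_eq[OF j] .
  have rrp: "0 < rr k j" using rr_pos k by simp
  have l: "(2::real)^j * (q1 - q0) \<le> 2 * ell k"
  proof -
    have "q1 - q0 \<le> rr k j" unfolding q0_def q1_def using rrp by auto
    then have "(2::real)^j * (q1 - q0) \<le> 2^j * rr k j" by (intro mult_left_mono) auto
    then show ?thesis using two_pow_rr[OF j(1)] by simp
  qed
  have G: "2^j \<le> 16 * wN N t \<or> 2 * ell k \<le> 16 * wN N t * (q0 - t) \<or> 2 * ell k \<le> 16 * wN N t * (t - q1)"
    using G_Lm[OF N k j t(3,4)] unfolding q0_def q1_def by simp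
  have G': "2^j \<le> 16 * wN N t \<or> 2^j * (q1 - q0) \<le> 16 * wN N t * (q0 - t) \<or> 2^j * (q1 - q0) \<le> 16 * wN N t * (t - q1)"
    using G l by linarith
  have "2^j * mu (Lminus k j) a b \<le> 16 * 1 * wN N t * (b - a)"
    by (rule PB_gen[OF t(1,2) mu_nonneg _ _ _ _ _ G']) (use mu_le[of q0 q1 a b] L wN_nonneg[OF N] in auto)
  then show ?thesis by simp
qed

lemma PB_Lp:
  assumes N: "2 \<le> N" and k: "2 \<le> k" "k \<le> N" and j: "1 \<le> j" "j \<le> k"
    and t: "a \<le> t" "t \<le> b" "0 \<le> t" "t \<le> 2^(N+1)"
  shows "2^j * mu (Lplus k j) a b \<le> 16 * wN N t * (b - a)"
proof -
  define q0 where "q0 = 2^(k+1) - rr k j"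
  define q1 where "q1 = 2^(k+1) - (if j < k then rr k j / 2 else 0)"
  have L: "Lplus k j = {q0..<q1}" unfolding q0_def q1_def using Lplus_eq[OF j] .
  have rrp: "0 < rr k j" using rr_pos k by simp
  have l: "(2::real)^j * (q1 - q0) \<le> 2 * ell k"
  proof -
    have "q1 - q0 \<le> rr k j" unfolding q0_def q1_def using rrp by auto
    then have "(2::real)^j * (q1 - q0) \<le> 2^j * rr k j" by (intro mult_left_mono) auto
    then show ?thesis using two_pow_rr[OF j(1)] by simp
  qed
  have G: "2^j \<le> 16 * wN N t \<or> 2 * ell k \<le> 16 * wN N t * (q0 - t) \<or> 2 * ell k \<le> 16 * wN N t * (t - q1)"
    using G_Lp[OF N k j t(3,4)] unfolding q0_def q1_def by simp
  have G': "2^j \<le> 16 * wN N t \<or> 2^j * (q1 - q0) \<le> 16 * wN N t * (q0 - t) \<or> 2^j * (q1 - q0) \<le> 16 * wN N t * (t - q1)"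
    using G l by linarith
  have "2^j * mu (Lplus k j) a b \<le> 16 * 1 * wN N t * (b - a)"
    by (rule PB_gen[OF t(1,2) mu_nonneg _ _ _ _ _ G']) (use mu_le[of q0 q1 a b] L wN_nonneg[OF N] in auto)
  then show ?thesis by simp
qed

lemma PB_I:
  assumes N: "2 \<le> N" and k: "2 \<le> k" "k \<le> N"
    and t: "a \<le> t" "t \<le> b" "0 \<le> t" "t \<le> 2^(N+1)"
  shows "2^(k+1) * mu (Iint k) a b \<le> 16 * real k * wN N t * (b - a)"
proof -
  have G: "2^(k+1) \<le> 16 * wN N t \<or> 2^(k+1) * 1 \<le> 16 * wN N t * (2^k - t) \<or> 2^(k+1) * 1 \<le> 16 * wN N t * (t - (2^k + real k))"
    using G_I[OF N k t(3,4)] by simp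
  have "2^(k+1) * mu (Iint k) a b \<le> 16 * real k * wN N t * (b - a)"
    by (rule PB_gen[OF t(1,2) mu_nonneg _ _ _ _ _ G]) (use mu_le[of "2^k" "2^k + real k" a b] k wN_nonneg[OF N] in \<open>auto simp: Iint_def\<close>)
  then show ?thesis by simp
qed

lemma Sk_local:
  assumes N: "2 \<le> N" and k: "2 \<le> k" "k \<le> N"
    and t: "a \<le> t" "t \<le> b" "0 \<le> t" "t \<le> 2^(N+1)"
  shows "Sk k a b \<le> 48 * real N * wN N t * (b - a)"
proof -
  let ?X = "wN N t * (b - a)"
  have X: "0 \<le> ?X" using wN_nonneg[OF N] t by simp
  have "(\<Sum>j=1..k. 2^j * (mu (Lminus k j) a b + mu (Lplus k j) a b)) \<le> (\<Sum>j=1..k. 32 * ?X)"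
  proof (rule sum_mono)
    fix j assume "j \<in> {1..k}"
    then have j: "1 \<le> j" "j \<le> k" by auto
    have "2^j * (mu (Lminus k j) a b + mu (Lplus k j) a b) = 2^j * mu (Lminus k j) a b + 2^j * mu (Lplus k j) a b"
      by (simp add: algebra_simps)
    also have "\<dots> \<le> 16 * wN N t * (b - a) + 16 * wN N t * (b - a)"
      using PB_Lm[OF N k j t] PB_Lp[OF N k j t] by linarith
    finally show "2^j * (mu (Lminus k j) a b + mu (Lplus k j) a b) \<le> 32 * ?X" by simp
  qed
  also have "\<dots> = 32 * real k * ?X" by simp
  finally have A: "(\<Sum>j=1..k. 2^j * (mu (Lminus k j) a b + mu (Lplus k j) a b)) \<le> 32 * real k * ?X" .
  have B: "2^(k+1) * mu (Iint k) a b \<le> 16 * real k * ?X" using PB_I[OF N k t] by (simp add: algebra_simps)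
  have "Sk k a b \<le> 48 * real k * ?X" unfolding Sk_def using A B by simp
  also have "\<dots> \<le> 48 * real N * ?X" using k X by (intro mult_right_mono) auto
  finally show ?thesis by (simp add: algebra_simps)
qed

lemma Sk_mass:
  assumes k: "2 \<le> k" "k \<le> N"
  shows "Sk k a b \<le> 4 * real N * 2^k"
proof -
  have ellle: "ell k \<le> 2^k/2" by (rule ell_le)
  have "(\<Sum>j=1..k. 2^j * (mu (Lminus k j) a b + mu (Lplus k j) a b)) \<le> (\<Sum>j=1..k. 2 * 2^k)"
  proof (rule sum_mono)
    fix j assume "j \<in> {1..k}"
    then have j: "1 \<le> j" "j \<le> k" by auto
    have rrp: "0 < rr k j" using rr_pos k by simp
    have "mu (Lminus k j) a b \<le> rr k j"
      using mu_le_len2[of "2^k + real k + (if j < k then rr k j / 2 else 0)" "2^k + real k + rr k j" a b] Lminus_eq[OF j] rrp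
      by auto
    moreover have "mu (Lplus k j) a b \<le> rr k j"
      using mu_le_len2[of "2^(k+1) - rr k j" "2^(k+1) - (if j < k then rr k j / 2 else 0)" a b] Lplus_eq[OF j] rrp
      by auto
    ultimately have "mu (Lminus k j) a b + mu (Lplus k j) a b \<le> 2 * rr k j" by simp
    then have "2^j * (mu (Lminus k j) a b + mu (Lplus k j) a b) \<le> 2^j * (2 * rr k j)"
      by (intro mult_left_mono) auto
    also have "\<dots> = 4 * ell k" using two_pow_rr[OF j(1), of k] by (simp add: algebra_simps)
    finally show "2^j * (mu (Lminus k j) a b + mu (Lplus k j) a b) \<le> 2 * 2^k" using ellle by simp
  qed
  also have "\<dots> = 2 * real k * 2^k" by simp
  finally have A: "(\<Sum>j=1..k. 2^j * (mu (Lminus k j) a b + mu (Lplus k j) a b)) \<le> 2 * real k * 2^k" .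
  have "mu (Iint k) a b \<le> real k" using mu_le_len2[of "2^k" "2^k + real k" a b] unfolding Iint_def by simp
  then have "2^(k+1) * mu (Iint k) a b \<le> 2^(k+1) * real k" by (intro mult_left_mono) simp_all
  then have B: "2^(k+1) * mu (Iint k) a b \<le> 2 * real k * 2^k" by simp
  have "Sk k a b \<le> 4 * real k * 2^k" unfolding Sk_def using A B by argo
  also have "\<dots> \<le> 4 * real N * 2^k" using k by (intro mult_right_mono) auto
  finally show ?thesis .
qed

lemma Sk_zero:
  assumes k: "2 \<le> k" and ab: "b \<le> 2^k \<or> 2^(k+1) \<le> a"
  shows "Sk k a b = 0"
proof -
  have ellle: "ell k \<le> 2^k/2" by (rule ell_le)
  have kk: "2^k + real k \<le> 2^(k+1)" using k_lt_pow[of k] by simp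
  have "b \<le> 2^k \<or> 2^k + real k \<le> a" using ab kk by (metis order_trans)
  then have I: "mu (Iint k) a b = 0" unfolding Iint_def by (intro mu_zero) auto
  have "mu (Lminus k j) a b = 0 \<and> mu (Lplus k j) a b = 0" if j: "j \<in> {1..k}" for j
  proof -
    have j: "1 \<le> j" "j \<le> k" using j by auto
    have rrp: "0 < rr k j" using rr_pos k by simp
    have rrle: "rr k j \<le> ell k" by (rule rr_le)
    have c: "2^k + real k + ell k \<le> 2^(k+1)" using ctr_ell[of k] ctr_eq[of k] ell_pos[of k] k by simp
    have "mu (Lminus k j) a b = 0"
      unfolding Lminus_eq[OF j] by (intro mu_zero) (use ab rrp rrle c in auto)
    moreover have "mu (Lplus k j) a b = 0"
      unfolding Lplus_eq[OF j] by (intro mu_zero) (use ab rrp rrle ellle in auto)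
    ultimately show ?thesis by simp
  qed
  then show ?thesis unfolding Sk_def I by simp
qed



lemma geo_sum: "(\<Sum>k=2..K. (2::real)^k) \<le> 2^(K+1)"
proof (induction K)
  case 0 then show ?case by simp
next
  case (Suc K)
  show ?case
  proof (cases "2 \<le> Suc K")
    case True
    then have "{2..Suc K} = insert (Suc K) {2..K}" by (simp add: atLeastAtMostSuc_conv)
    then have "(\<Sum>k=2..Suc K. (2::real)^k) = 2^(Suc K) + (\<Sum>k=2..K. 2^k)" by simp
    also have "\<dots> \<le> 2^(Suc K) + 2^(K+1)" using Suc by simp
    also have "\<dots> = 2^(Suc K + 1)" by simp
    finally show ?thesis .
  next
    case False
    then have "{2..Suc K} = {}" by auto
    then show ?thesis by simp
  qed
qed

lemma findK:
  fixes b :: real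
  assumes "2 \<le> n" "4 < b" "b \<le> 2^(n+1)"
  shows "\<exists>K. 2 \<le> K \<and> K \<le> n \<and> 2^K < b \<and> b \<le> 2^(K+1)"
  using assms(1,3)
proof (induction n rule: dec_induct)
  case base then show ?case using assms(2) by (intro exI[of _ 2]) auto
next
  case (step n)
  show ?case
  proof (cases "b \<le> 2^(n+1)")
    case True then show ?thesis using step by force
  next
    case False then show ?thesis using step by (intro exI[of _ "Suc n"]) auto
  qed
qed

lemma sum_two_delta:
  fixes f :: "nat \<Rightarrow> real"
  assumes "\<And>k. k \<in> S \<Longrightarrow> f k \<le> (if k = K then B else 0) + (if k + 1 = K then B else 0)" "finite S" "0 \<le> B"
  shows "sum f S \<le> 2 * B"
proof -
  have "sum f S \<le> (\<Sum>k\<in>S. (if k = K then B else 0) + (if k + 1 = K then B else 0))"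
    using assms(1) by (rule sum_mono)
  also have "\<dots> = (\<Sum>k\<in>S. (if k = K then B else 0)) + (\<Sum>k\<in>S. (if k + 1 = K then B else 0))"
    by (rule sum.distrib)
  also have "(\<Sum>k\<in>S. (if k = K then B else 0)) \<le> B" using assms(2,3) by (simp add: sum.delta)
  also have "(\<Sum>k\<in>S. (if k + 1 = K then B else 0)) \<le> B"
  proof (cases "K = 0")
    case True then show ?thesis using assms by simp
  next
    case False
    then have "\<And>k. (k + 1 = K) = (k = K - 1)" by auto
    then show ?thesis using assms(2,3) by (simp add: sum.delta)
  qed
  finally show ?thesis by simp
qed

lemma SumS:
  assumes N: "2 \<le> N" and t: "0 \<le> a" "a \<le> t" "t \<le> b" "b \<le> 2^(N+1)"
  shows "(\<Sum>k=2..N. Sk k a b) \<le> 96 * real N * wN N t * (b - a)"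
proof -
  have t': "0 \<le> t" "t \<le> 2^(N+1)" using t by auto
  have W1: "1 \<le> wN N t" using wN_ge1[OF N] .
  have X: "0 \<le> real N * wN N t * (b - a)" using W1 t by simp
  show ?thesis
  proof (cases "b \<le> 4")
    case True
    have "(\<Sum>k=2..N. Sk k a b) = (\<Sum>k=2..N. 0)"
    proof (rule sum.cong[OF refl])
      fix k assume "k \<in> {2..N}"
      then have k: "2 \<le> k" by auto
      have "(4::real) = 2^2" by simp
      also have "\<dots> \<le> 2^k" using k by (rule pow2_mono)
      finally show "Sk k a b = 0" using Sk_zero[OF k] True by simp
    qed
    then show ?thesis using X by simp
  next
    case False
    then obtain K where K: "2 \<le> K" "K \<le> N" "2^K < b" "b \<le> 2^(K+1)"
      using findK[OF N _ t(4)] by auto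
    show ?thesis
    proof (cases "2^K / 2 \<le> a")
      case True
      let ?B = "48 * real N * wN N t * (b - a)"
      have "(\<Sum>k=2..N. Sk k a b) \<le> 2 * ?B"
      proof (rule sum_two_delta)
        show "0 \<le> ?B" using X by simp
        show "finite {2..N}" by simp
        fix k assume "k \<in> {2..N}"
        then have k: "2 \<le> k" "k \<le> N" by auto
        have loc: "Sk k a b \<le> ?B" using Sk_local[OF N k t(2,3) t'] .
        show "Sk k a b \<le> (if k = K then ?B else 0) + (if k + 1 = K then ?B else 0)"
        proof (cases "k = K \<or> k + 1 = K")
          case True then show ?thesis using loc X by auto
        next
          case False
          then consider "K + 1 \<le> k" | "k + 2 \<le> K" by linarith
          then have "Sk k a b = 0"
          proof cases
            case 1
            then have "(2::real)^(K+1) \<le> 2^k" by (rule pow2_mono)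
            then show ?thesis using Sk_zero[OF k(1)] K by simp
          next
            case 2
            then have "(2::real)^(k+2) \<le> 2^K" by (rule pow2_mono)
            then have "(2::real)^(k+1) \<le> 2^K / 2" by simp
            then show ?thesis using Sk_zero[OF k(1)] True by simp
          qed
          then show ?thesis using False by simp
        qed
      qed
      then show ?thesis by simp
    next
      case False
      have ba: "2^K / 2 \<le> b - a" using False K by simp
      have "(\<Sum>k=2..N. Sk k a b) \<le> (\<Sum>k=2..N. if k \<le> K then 4 * real N * 2^k else 0)"
      proof (rule sum_mono)
        fix k assume "k \<in> {2..N}"
        then have k: "2 \<le> k" "k \<le> N" by auto
        show "Sk k a b \<le> (if k \<le> K then 4 * real N * 2^k else 0)"
        proof (cases "k \<le> K")
          case True then show ?thesis using Sk_mass[OF k] by simp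
        next
          case False
          then have "(2::real)^(K+1) \<le> 2^k" by (intro pow2_mono) simp
          then show ?thesis using Sk_zero[OF k(1)] K False by simp
        qed
      qed
      also have "\<dots> = (\<Sum>k=2..K. 4 * real N * 2^k)"
      proof -
        have "{2..N} \<inter> {k. k \<le> K} = {2..K}" using K by auto
        then show ?thesis by (simp add: sum.If_cases)
      qed
      also have "\<dots> = 4 * real N * (\<Sum>k=2..K. 2^k)" by (simp add: sum_distrib_left)
      also have "\<dots> \<le> 4 * real N * 2^(K+1)" using geo_sum[of K] by (intro mult_left_mono) auto
      also have "\<dots> = 16 * real N * (2^K / 2)" by simp
      also have "\<dots> \<le> 16 * real N * (b - a)" using ba by (intro mult_left_mono) auto
      also have "\<dots> \<le> 16 * real N * wN N t * (b - a)"
        using le_W[OF W1, of "b - a" "16 * real N"] t by simp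
      also have "\<dots> \<le> 96 * real N * wN N t * (b - a)" using X by simp
      finally show ?thesis .
    qed
  qed
qed

lemma core:
  assumes N: "2 \<le> N" and t: "0 \<le> a" "a \<le> t" "t \<le> b" "b \<le> 2^(N+1)"
  shows "integral {a..b} (wN N) \<le> 100 * real N * wN N t * (b - a)"
proof -
  have W1: "1 \<le> wN N t" using wN_ge1[OF N] .
  have X: "0 \<le> real N * wN N t * (b - a)" using W1 t by simp
  have "integral {a..b} (wN N) = integral {a..b} (wbase N)"
  proof (rule integral_spike[of "{2^(N+1)}"])
    show "negligible {(2::real)^(N+1)}" by simp
    fix x assume "x \<in> {a..b} - {2^(N+1)}"
    then show "wbase N x = wN N x" using wN_base[of x N] t by auto
  qed
  also have "\<dots> \<le> mu {0..<4} a b + (\<Sum>k=2..N. Sk k a b)" by (rule int_wbase_le)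
  also have "mu {0..<4} a b \<le> b - a" using mu_le_len[of a b 0 4] t by simp
  also have "b - a \<le> wN N t * (b - a)" using le_W[OF W1, of "b - a" 1] t by simp
  also have "(\<Sum>k=2..N. Sk k a b) \<le> 96 * real N * wN N t * (b - a)" by (rule SumS[OF N t])
  also have "wN N t * (b - a) + 96 * real N * wN N t * (b - a) \<le> 100 * real N * wN N t * (b - a)"
  proof -
    have "wN N t * (b - a) \<le> real N * wN N t * (b - a)" using N W1 t
      using mult_right_mono[of 1 "real N" "wN N t * (b - a)"] by (simp add: algebra_simps)
    moreover have "96 * real N * wN N t * (b - a) = 96 * (real N * wN N t * (b - a))"
      "100 * real N * wN N t * (b - a) = 100 * (real N * wN N t * (b - a))" by (simp_all add: mult.assoc)
    ultimately show ?thesis using X by linarith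
  qed
  finally show ?thesis by simp
qed



lemma wk_small: "2 \<le> k \<Longrightarrow> x < 2^k \<Longrightarrow> wk k x = 0"
proof -
  assume k: "2 \<le> k" and x: "x < 2^k"
  have ellp: "0 < ell k" using ell_pos k by simp
  have ctr2: "ctr k + ell k = 2^(k+1)" by (rule ctr_ell)
  have ctr: "ctr k = 2^k + real k + ell k" by (rule ctr_eq)
  have h: "(1/2::real)^i \<le> 1" for i by (simp add: power_le_one)
  have h0: "0 \<le> (1/2::real)^i" for i by simp
  have "x \<notin> Lminus k j" for j
  proof -
    have "ell k * (1 - (1/2)^j) \<le> ell k" using ellp h0[of j] by (simp add: mult_left_le)
    then have "2^k \<le> ctr k - ell k * (1 - (1/2)^j)" using ctr by simp
    then show ?thesis unfolding Lminus_def using x by auto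
  qed
  moreover have "x \<notin> Lplus k j" for j
  proof -
    have "0 \<le> ell k * (1 - (1/2)^(j-1))" using ellp h[of "j-1"] by simp
    then have A: "2^k \<le> ctr k + ell k * (1 - (1/2)^(j-1))" using ctr ellp by simp
    have "ell k * (1/2)^(k-1) \<le> ell k" using ellp h[of "k-1"] by (simp add: mult_left_le)
    moreover have "(2::real)^(k+1) = 2 * 2^k" by simp
    ultimately have B: "2^k \<le> 2^(k+1) - ell k * (1/2)^(k-1)" using ctr2 ctr ellp by linarith
    show ?thesis unfolding Lplus_def using x A B by auto
  qed
  moreover have "x \<notin> Iint k" unfolding Iint_def using x by auto
  ultimately show ?thesis unfolding wk_def by (simp add: indicator_def)
qed

lemma wbase_small: "0 \<le> x \<Longrightarrow> x < 4 \<Longrightarrow> wbase N x = 1"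
proof -
  assume x: "0 \<le> x" "x < 4"
  have "wk k x = 0" if "k \<in> {2..N}" for k
  proof -
    have k: "2 \<le> k" using that by simp
    have "(4::real) = 2^2" by simp
    also have "\<dots> \<le> 2^k" using k by (rule pow2_mono)
    finally show ?thesis using wk_small[OF k] x by simp
  qed
  then show ?thesis unfolding wbase_def using x by simp
qed

lemma w_period: "wN N (of_int q * 2^(N+2)) = 1"
proof -
  have "wN N (0 + of_int q * 2^(N+2)) = wN N 0" by (rule wN_periodic)
  moreover have "wN N 0 = 1" using wN_base[of 0 N] wbase_small[of 0 N] by simp
  ultimately show ?thesis by simp
qed

lemma int_shift: "integral {c..d} (wN N) = integral {c - of_int q * 2^(N+2) .. d - of_int q * 2^(N+2)} (wN N)"
proof -
  let ?s = "of_int q * (2::real)^(N+2)"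
  have "integral {c - ?s..d - ?s} (\<lambda>x. wN N (x + ?s)) = integral {c..d} (wN N)"
    by (rule integral_shift_real_ivl)
  moreover have "(\<lambda>x. wN N (x + ?s)) = wN N" using wN_periodic by auto
  ultimately show ?thesis by simp
qed

lemma int_refl: "integral {c..d} (wN N) = integral {of_int q * 2^(N+2) - d .. of_int q * 2^(N+2) - c} (wN N)"
proof -
  let ?s = "of_int q * (2::real)^(N+2)"
  have A: "integral {-d .. -c} (\<lambda>x. wN N (-x)) = integral {c..d} (wN N)" by (rule Henstock_Kurzweil_Integration.integral_reflect_real)
  have "integral {-d - (-?s) .. -c - (-?s)} (\<lambda>x. (\<lambda>y. wN N (-y)) (x + (-?s))) = integral {-d .. -c} (\<lambda>x. wN N (-x))"
    by (rule integral_shift_real_ivl)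
  moreover have "(\<lambda>x. (\<lambda>y. wN N (-y)) (x + (-?s))) = wN N"
  proof
    fix x show "(\<lambda>y. wN N (-y)) (x + (-?s)) = wN N x" using wN_refl[of N q x] by simp
  qed
  ultimately show ?thesis using A by simp
qed



lemma seg:
  fixes m :: int
  assumes N: "2 \<le> N" and ab: "of_int m * 2^(N+1) \<le> a" "a \<le> t" "t \<le> b" "b \<le> (of_int m + 1) * 2^(N+1)"
  shows "integral {a..b} (wN N) \<le> 100 * real N * wN N t * (b - a)"
proof (cases "even m")
  case True
  then obtain q where m: "m = 2 * q" by blast
  let ?s = "of_int q * (2::real)^(N+2)"
  have s: "of_int m * (2::real)^(N+1) = ?s" unfolding m by simp
  have "integral {a..b} (wN N) = integral {a - ?s..b - ?s} (wN N)" by (rule int_shift)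
  also have "\<dots> \<le> 100 * real N * wN N (t - ?s) * ((b - ?s) - (a - ?s))"
    by (rule core[OF N]) (use ab s in \<open>auto simp: algebra_simps\<close>)
  also have "wN N (t - ?s) = wN N t" using wN_periodic[of N "t - ?s" q] by simp
  finally show ?thesis by simp
next
  case False
  then obtain q where m: "m = 2 * q + 1" by (metis oddE)
  let ?s = "of_int (q + 1) * (2::real)^(N+2)"
  have s: "(of_int m + 1) * (2::real)^(N+1) = ?s" unfolding m by (simp add: algebra_simps)
  have s2: "of_int m * (2::real)^(N+1) = ?s - 2^(N+1)" unfolding m by (simp add: algebra_simps)
  have "integral {a..b} (wN N) = integral {?s - b..?s - a} (wN N)" by (rule int_refl)
  also have "\<dots> \<le> 100 * real N * wN N (?s - t) * ((?s - a) - (?s - b))"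
    by (rule core[OF N]) (use ab s s2 in \<open>auto simp: algebra_simps\<close>)
  also have "wN N (?s - t) = wN N t" using wN_refl[of N "q+1" t] by simp
  finally show ?thesis by simp
qed

lemma seg_bound:
  fixes m :: int
  assumes N: "2 \<le> N" and ab: "of_int m * 2^(N+1) \<le> a" "a \<le> b" "b \<le> (of_int m + 1) * 2^(N+1)"
  shows "integral {a..b} (wN N) \<le> 100 * real N * 2^(N+1)"
proof -
  let ?A = "of_int m * (2::real)^(N+1)" and ?B = "(of_int m + 1) * (2::real)^(N+1)"
  have "integral {a..b} (wN N) \<le> integral {?A..?B} (wN N)"
    by (rule integral_subset_le) (use ab wN_integrable[OF N] wN_nonneg[OF N] in auto)
  also have "\<dots> \<le> 100 * real N * 1 * (?B - ?A)"
  proof (cases "even m")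
    case True
    then obtain q where m: "m = 2 * q" by blast
    have "wN N ?A = 1" using w_period[of N q] unfolding m by (simp add: algebra_simps)
    then show ?thesis using seg[OF N, of m ?A ?A ?B] by simp
  next
    case False
    then obtain q where m: "m = 2 * q + 1" by (metis oddE)
    have "wN N ?B = 1" using w_period[of N "q+1"] unfolding m by (simp add: algebra_simps)
    then show ?thesis using seg[OF N, of m ?A ?B ?B] by simp
  qed
  also have "\<dots> = 100 * real N * 2^(N+1)" by (simp add: algebra_simps)
  finally show ?thesis .
qed

lemma floor_seg:
  fixes a :: real
  shows "of_int \<lfloor>a / 2^(N+1)\<rfloor> * 2^(N+1) \<le> a \<and> a < (of_int \<lfloor>a / 2^(N+1)\<rfloor> + 1) * 2^(N+1)"
proof -
  define m where "m = \<lfloor>a / 2^(N+1)\<rfloor>"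
  have "of_int m \<le> a / 2^(N+1)" "a / 2^(N+1) < of_int m + 1" unfolding m_def by linarith+
  then have "of_int m * 2^(N+1) \<le> a" "a < (of_int m + 1) * 2^(N+1)"
    by (simp_all add: field_simps)
  then show ?thesis unfolding m_def by simp
qed

lemma short:
  assumes N: "2 \<le> N" and ab: "a \<le> t" "t \<le> b" "b - a \<le> 2^(N+1)"
  shows "integral {a..b} (wN N) \<le> 200 * real N * wN N t * (b - a)"
proof -
  let ?H = "(2::real)^(N+1)"
  define m where "m = \<lfloor>a / ?H\<rfloor>"
  define f where "f = (of_int m + 1) * ?H"
  have m: "of_int m * ?H \<le> a" "a < f" using floor_seg[of a N] unfolding m_def f_def by auto
  have W1: "1 \<le> wN N t" using wN_ge1[OF N] .
  have X: "0 \<le> real N * wN N t * (b - a)" using W1 ab by simp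
  show ?thesis
  proof (cases "b \<le> f")
    case True
    have "integral {a..b} (wN N) \<le> 100 * real N * wN N t * (b - a)"
      by (rule seg[OF N, of m]) (use m True ab f_def in auto)
    then show ?thesis using X by simp
  next
    case False
    have bf: "b \<le> (of_int (m+1) + 1) * ?H" using ab m f_def by (simp add: algebra_simps)
    have f1: "f = of_int (m+1) * ?H" unfolding f_def by simp
    have s2: "2 * f = of_int (m+1) * 2^(N+2)" unfolding f_def by (simp add: algebra_simps)
    have wr: "wN N (2 * f - x) = wN N x" for x by (subst s2) (rule wN_refl)
    have ir: "integral {c..d} (wN N) = integral {2 * f - d..2 * f - c} (wN N)" for c d
      unfolding s2 by (rule int_refl)
    have comb: "integral {a..f} (wN N) + integral {f..b} (wN N) = integral {a..b} (wN N)"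
      by (rule Henstock_Kurzweil_Integration.integral_combine) (use m False wN_integrable[OF N] in auto)
    show ?thesis
    proof (cases "b - f \<le> f - a")
      case True
      have "integral {f..b} (wN N) = integral {2*f - b..f} (wN N)" using ir[of f b] by simp
      also have "\<dots> \<le> integral {a..f} (wN N)"
        by (rule integral_subset_le) (use True wN_integrable[OF N] wN_nonneg[OF N] in auto)
      finally have I2: "integral {f..b} (wN N) \<le> integral {a..f} (wN N)" .
      define t' where "t' = (if t \<le> f then t else 2 * f - t)"
      have t': "a \<le> t'" "t' \<le> f" "wN N t' = wN N t" using ab True wr unfolding t'_def by auto
      have "integral {a..f} (wN N) \<le> 100 * real N * wN N t' * (f - a)"
        by (rule seg[OF N, of m]) (use m t' f_def in auto)
      also have "\<dots> = 100 * real N * wN N t * (f - a)" using t' by simp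
      also have "\<dots> \<le> 100 * real N * wN N t * (b - a)"
        using W1 False by (intro mult_left_mono) auto
      finally show ?thesis using comb I2 X by linarith
    next
      case False2: False
      have "integral {a..f} (wN N) = integral {f..2*f - a} (wN N)" using ir[of a f] by simp
      also have "\<dots> \<le> integral {f..b} (wN N)"
        by (rule integral_subset_le) (use False2 m wN_integrable[OF N] wN_nonneg[OF N] in auto)
      finally have I1: "integral {a..f} (wN N) \<le> integral {f..b} (wN N)" .
      define t' where "t' = (if f \<le> t then t else 2 * f - t)"
      have t': "f \<le> t'" "t' \<le> b" "wN N t' = wN N t" using ab False2 wr unfolding t'_def by auto
      have "integral {f..b} (wN N) \<le> 100 * real N * wN N t' * (b - f)"
        by (rule seg[OF N, of "m+1"]) (use t' f1 bf in auto)
      also have "\<dots> = 100 * real N * wN N t * (b - f)" using t' by simp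
      also have "\<dots> \<le> 100 * real N * wN N t * (b - a)"
        using W1 m by (intro mult_left_mono) auto
      finally show ?thesis using comb I1 X by linarith
    qed
  qed
qed



lemma short_bound:
  assumes N: "2 \<le> N" and ab: "a \<le> b" "b - a \<le> 2^(N+1)"
  shows "integral {a..b} (wN N) \<le> 200 * real N * 2^(N+1)"
proof -
  let ?H = "(2::real)^(N+1)"
  define m where "m = \<lfloor>a / ?H\<rfloor>"
  define f where "f = (of_int m + 1) * ?H"
  have m: "of_int m * ?H \<le> a" "a < f" using floor_seg[of a N] unfolding m_def f_def by auto
  have X: "0 \<le> 100 * real N * ?H" by simp
  show ?thesis
  proof (cases "b \<le> f")
    case True
    have "integral {a..b} (wN N) \<le> 100 * real N * ?H"
      by (rule seg_bound[OF N, of m]) (use m True ab f_def in auto)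
    moreover have "100 * real N * ?H \<le> 200 * real N * ?H" using X by linarith
    ultimately show ?thesis by linarith
  next
    case False
    have bf: "b \<le> (of_int (m+1) + 1) * ?H" using ab m f_def by (simp add: algebra_simps)
    have f1: "f = of_int (m+1) * ?H" unfolding f_def by simp
    have comb: "integral {a..f} (wN N) + integral {f..b} (wN N) = integral {a..b} (wN N)"
      by (rule Henstock_Kurzweil_Integration.integral_combine) (use m False wN_integrable[OF N] in auto)
    have "integral {a..f} (wN N) \<le> 100 * real N * ?H"
      by (rule seg_bound[OF N, of m]) (use m f_def in auto)
    moreover have "integral {f..b} (wN N) \<le> 100 * real N * ?H"
      by (rule seg_bound[OF N, of "m+1"]) (use False f1 bf in auto)
    ultimately show ?thesis using comb by linarith
  qed
qed

lemma long_bound: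
  assumes N: "2 \<le> N"
  shows "a \<le> b \<Longrightarrow> b - a \<le> (real n + 1) * 2^(N+1) \<Longrightarrow> integral {a..b} (wN N) \<le> 200 * real N * 2^(N+1) * (real n + 1)"
proof (induction n arbitrary: a)
  case 0
  then show ?case using short_bound[OF N, of a b] by simp
next
  case (Suc n)
  let ?H = "(2::real)^(N+1)"
  show ?case
  proof (cases "b - a \<le> ?H")
    case True
    have "integral {a..b} (wN N) \<le> 200 * real N * ?H" using short_bound[OF N Suc(2) True] .
    also have "\<dots> \<le> 200 * real N * ?H * (real (Suc n) + 1)"
      using mult_left_mono[of 1 "real (Suc n) + 1" "200 * real N * ?H"] by simp
    finally show ?thesis .
  next
    case False
    let ?c = "a + ?H"
    have comb: "integral {a..?c} (wN N) + integral {?c..b} (wN N) = integral {a..b} (wN N)"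
      by (rule Henstock_Kurzweil_Integration.integral_combine) (use False wN_integrable[OF N] in auto)
    have A: "integral {a..?c} (wN N) \<le> 200 * real N * ?H" using short_bound[OF N, of a ?c] by simp
    have B: "integral {?c..b} (wN N) \<le> 200 * real N * ?H * (real n + 1)"
      by (rule Suc.IH) (use False Suc.prems in \<open>auto simp: algebra_simps\<close>)
    have "integral {a..b} (wN N) \<le> 200 * real N * ?H + 200 * real N * ?H * (real n + 1)"
      using A B comb by linarith
    also have "\<dots> = 200 * real N * ?H * (real (Suc n) + 1)" by (simp add: algebra_simps)
    finally show ?thesis .
  qed
qed

lemma final_bound:
  assumes N: "2 \<le> N" and ab: "a \<le> t" "t \<le> b"
  shows "integral {a..b} (wN N) \<le> 400 * real N * wN N t * (b - a)"
proof -
  let ?H = "(2::real)^(N+1)"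
  have W1: "1 \<le> wN N t" using wN_ge1[OF N] .
  have X: "0 \<le> real N * wN N t * (b - a)" using W1 ab by simp
  show ?thesis
  proof (cases "b - a \<le> ?H")
    case True
    then show ?thesis using short[OF N ab True] X by simp
  next
    case False
    define n where "n = nat \<lfloor>(b - a) / ?H\<rfloor>"
    have q: "1 < (b - a) / ?H" using False by (simp add: field_simps)
    have fl: "of_int \<lfloor>(b - a) / ?H\<rfloor> \<le> (b - a) / ?H" "(b - a) / ?H < of_int \<lfloor>(b - a) / ?H\<rfloor> + 1" by linarith+
    have fl1: "1 \<le> \<lfloor>(b - a) / ?H\<rfloor>" using q by linarith
    have "0 \<le> \<lfloor>(b - a) / ?H\<rfloor>" using fl1 by linarith
    then have n: "real n = of_int \<lfloor>(b - a) / ?H\<rfloor>" unfolding n_def by (rule of_nat_nat)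
    have n1: "1 \<le> real n" using n fl1 by simp
    have "real n \<le> (b - a) / ?H" using fl n by simp
    then have nH: "real n * ?H \<le> b - a" by (simp add: field_simps)
    have "(b - a) / ?H < real n + 1" using fl n by simp
    then have "b - a \<le> (real n + 1) * ?H" by (simp add: field_simps)
    then have "integral {a..b} (wN N) \<le> 200 * real N * ?H * (real n + 1)"
      using long_bound[OF N, of a b n] ab by simp
    also have "\<dots> \<le> 200 * real N * ?H * (2 * real n)" using n1 by (intro mult_left_mono) auto
    also have "\<dots> = 400 * real N * (real n * ?H)" by (simp add: algebra_simps)
    also have "\<dots> \<le> 400 * real N * (b - a)" using nH by (intro mult_left_mono) auto
    also have "\<dots> \<le> 400 * real N * wN N t * (b - a)"
      using le_W[OF W1, of "b - a" "400 * real N"] ab by simp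
    finally show ?thesis .
  qed
qed



lemma AE_Ico_contra:
  fixes p q :: real
  assumes ae: "AE x in lborel. x \<in> {p..<q} \<longrightarrow> P x" and np: "\<And>x. x \<in> {p..<q} \<Longrightarrow> \<not> P x" and pq: "p < q"
  shows False
proof -
  have "AE x in lborel. x \<notin> {p..<q}" using ae by (rule eventually_mono) (use np in auto)
  then have "{p..<q} \<in> null_sets lborel" by (subst AE_iff_null_sets) auto
  then have "emeasure lborel {p..<q} = 0" by auto
  then show False using pq by simp
qed

lemma essinf_ge:
  fixes w :: "real \<Rightarrow> real"
  assumes ab: "a < b" and m: "\<And>x. x \<in> {a..b} \<Longrightarrow> m \<le> w x" and B: "\<And>x. w x \<le> B"
  shows "m \<le> essinf_on a b w"
  unfolding essinf_on_def
proof (rule cSup_upper)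
  show "m \<in> {z. AE x in lborel. x \<in> {a..b} \<longrightarrow> z \<le> w x}" using m by auto
  show "bdd_above {z. AE x in lborel. x \<in> {a..b} \<longrightarrow> z \<le> w x}"
  proof (rule bdd_aboveI)
    fix z assume z: "z \<in> {z. AE x in lborel. x \<in> {a..b} \<longrightarrow> z \<le> w x}"
    show "z \<le> B"
    proof (rule ccontr)
      assume "\<not> z \<le> B"
      have "AE x in lborel. x \<in> {a..<b} \<longrightarrow> z \<le> w x" using z by (auto elim: eventually_mono)
      then show False by (rule AE_Ico_contra) (use \<open>\<not> z \<le> B\<close> B ab in \<open>auto intro: order_trans\<close>)
    qed
  qed
qed

lemma essinf_le:
  fixes w :: "real \<Rightarrow> real"
  assumes pq: "p < q" "{p..<q} \<subseteq> {a..b}" and M: "\<And>x. x \<in> {p..<q} \<Longrightarrow> w x \<le> M"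
    and ne: "\<And>x. x \<in> {a..b} \<Longrightarrow> m \<le> w x"
  shows "essinf_on a b w \<le> M"
  unfolding essinf_on_def
proof (rule cSup_least)
  show "{z. AE x in lborel. x \<in> {a..b} \<longrightarrow> z \<le> w x} \<noteq> {}" using ne by auto
  fix z assume z: "z \<in> {z. AE x in lborel. x \<in> {a..b} \<longrightarrow> z \<le> w x}"
  show "z \<le> M"
  proof (rule ccontr)
    assume "\<not> z \<le> M"
    have "AE x in lborel. x \<in> {a..b} \<longrightarrow> z \<le> w x" using z by simp
    then have "AE x in lborel. x \<in> {p..<q} \<longrightarrow> z \<le> w x" by (rule eventually_mono) (use pq(2) in auto)
    then show False by (rule AE_Ico_contra) (use \<open>\<not> z \<le> M\<close> M pq in \<open>auto intro: order_trans\<close>)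
  qed
qed

lemma meas_leb_Ico: "p \<le> q \<Longrightarrow> measure lebesgue {p..<q::real} = q - p"
  by simp



lemma L_int01: "2 \<le> N \<Longrightarrow> (LINT x:{0..1}|lborel. wN N x) = 1"
proof -
  assume N: "2 \<le> N"
  have "(LINT x:{0..1}|lborel. wN N x) = integral {0..1} (wN N)" by (rule wN_LINT[OF N])
  also have "\<dots> = integral {0..1} (\<lambda>x::real. 1::real)"
  proof (rule integral_spike[of "{}"])
    show "negligible ({}::real set)" by simp
    fix x :: real assume x: "x \<in> {0..1} - {}"
    have "(1::real) < 2^(N+1)" by (rule one_less_power) auto
    then show "1 = wN N x" using wN_base[of x N] wbase_small[of x N] x by auto
  qed
  also have "\<dots> = 1" by simp
  finally show ?thesis .
qed

lemma L_upper:
  assumes N: "2 \<le> N"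
  shows "A1_const (wN N) \<le> ereal (400 * real N)"
  unfolding A1_const_def
proof (rule Inf_lower, simp, intro allI impI)
  fix a b :: real assume ab: "a < b"
  define I where "I = (LINT x:{a..b}|lborel. wN N x)"
  have I: "I = integral {a..b} (wN N)" unfolding I_def by (rule wN_LINT[OF N])
  have pos: "0 < 400 * real N * (b - a)" using N ab by simp
  define m where "m = I / (400 * real N * (b - a))"
  have "m \<le> wN N x" if x: "x \<in> {a..b}" for x
  proof -
    have "I \<le> 400 * real N * wN N x * (b - a)" unfolding I using final_bound[OF N, of a x b] x by auto
    then have "I \<le> wN N x * (400 * real N * (b - a))" by (simp add: algebra_simps)
    then show ?thesis unfolding m_def using pos by (simp add: divide_le_eq)
  qed
  then have "m \<le> essinf_on a b (wN N)" by (intro essinf_ge[OF ab]) (use wN_le in auto)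
  moreover have "I / (b - a) = 400 * real N * m"
  proof -
    have "real N \<noteq> 0" "b - a \<noteq> 0" using N ab by auto
    then show ?thesis unfolding m_def by (simp add: field_simps)
  qed
  ultimately show "(LINT x:{a..b}|lborel. wN N x) / (b - a) \<le> 400 * real N * essinf_on a b (wN N)"
    unfolding I_def[symmetric] using N by (simp add: mult_left_mono)
qed

lemma L_lower:
  assumes N: "2 \<le> N"
  shows "ereal (1 * real N) \<le> A1_const (wN N)"
  unfolding A1_const_def
proof (rule Inf_greatest)
  fix y assume "y \<in> {ereal C |C. \<forall>a b. a < b \<longrightarrow> (LINT x:{a..b}|lborel. wN N x) / (b - a) \<le> C * essinf_on a b (wN N)}"
  then obtain C where y: "y = ereal C" and C: "\<forall>a b. a < b \<longrightarrow> (LINT x:{a..b}|lborel. wN N x) / (b - a) \<le> C * essinf_on a b (wN N)"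
    by auto
  define b :: real where "b = 2^N + real N"
  have b0: "0 < b" unfolding b_def by (intro add_pos_nonneg) simp_all
  have bH: "b < 2^(N+1)" unfolding b_def using k_lt_pow[of N] by simp
  have e1: "essinf_on 0 b (wN N) = 1"
  proof (rule antisym)
    show "essinf_on 0 b (wN N) \<le> 1"
    proof (rule essinf_le[of 0 4])
      show "(0::real) < 4" by simp
      have "(4::real) = 2^2" by simp
      also have "\<dots> \<le> 2^N" using N by (rule pow2_mono)
      finally have p4: "(4::real) \<le> 2^N" .
      then show "{0..<4} \<subseteq> {0..b}" unfolding b_def by auto
      fix x :: real assume x: "x \<in> {0..<4}"
      have "(4::real) < 2^(N+1)" using p4 by simp
      then show "wN N x \<le> 1" using wN_base[of x N] wbase_small[of x N] x by auto
    next
      fix x show "1 \<le> wN N x" by (rule wN_ge1[OF N])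
    qed
    show "1 \<le> essinf_on 0 b (wN N)" by (rule essinf_ge[OF b0]) (use wN_ge1[OF N] wN_le in auto)
  qed
  have "integral {0..b} (\<lambda>x::real. (2::real)^(N+1) * indicator (Iint N) x) \<le> integral {0..b} (wN N)"
  proof (rule integral_le)
    show "(\<lambda>x::real. (2::real)^(N+1) * indicator (Iint N) x) integrable_on {0..b}"
      using has_integral_mult_right[OF ind_has_int[OF Iint_lm]] by blast
    show "wN N integrable_on {0..b}" by (rule wN_integrable[OF N])
    fix x assume x: "x \<in> {0..b}"
    show "2^(N+1) * indicator (Iint N) x \<le> wN N x"
    proof (cases "x \<in> Iint N")
      case True
      then show ?thesis using wN_base[of x N] wbase_ge_I[of N N x] x bH N by simp
    next
      case False then show ?thesis using wN_nonneg[OF N] by simp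
    qed
  qed
  moreover have "integral {0..b} (\<lambda>x::real. (2::real)^(N+1) * indicator (Iint N) x) = 2^(N+1) * mu (Iint N) 0 b"
    using has_integral_mult_right[OF ind_has_int[OF Iint_lm]] by blast
  moreover have "mu (Iint N) 0 b = real N"
  proof -
    have z: "(0::real) \<le> 2^N" by simp
    have "Iint N \<subseteq> {0..b}"
    proof
      fix x assume "x \<in> Iint N"
      then have x: "2^N \<le> x" "x < 2^N + real N" unfolding Iint_def by auto
      then have "0 \<le> x" using z by linarith
      then show "x \<in> {0..b}" using x unfolding b_def by simp
    qed
    then have "Iint N \<inter> {0..b} = {2^N..<2^N + real N}" unfolding Iint_def by auto
    then show ?thesis unfolding mu_def by simp
  qed
  ultimately have I: "2^(N+1) * real N \<le> (LINT x:{0..b}|lborel. wN N x)" using wN_LINT[OF N] by simp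
  have "2^(N+1) * real N / b \<le> (LINT x:{0..b}|lborel. wN N x) / (b - 0)"
    using I b0 by (simp add: divide_right_mono)
  also have "\<dots> \<le> C * essinf_on 0 b (wN N)" using C[rule_format, of 0 b] b0 by simp
  also have "\<dots> = C * 1" using e1 by simp
  finally have "2^(N+1) * real N / b \<le> C" by simp
  moreover have "real N \<le> 2^(N+1) * real N / b"
  proof -
    have "real N * b \<le> 2^(N+1) * real N" unfolding b_def using k_lt_pow[of N]
      by (simp add: algebra_simps mult_left_mono)
    then show ?thesis using b0 by (simp add: le_divide_eq)
  qed
  ultimately show "ereal (1 * real N) \<le> y" unfolding y by simp
qed

lemma sum_k_ge: "2 \<le> N \<Longrightarrow> 1/4 * (real N)^2 \<le> (\<Sum>k=2..N. real k)"
proof (induction N rule: dec_induct)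
  case base then show ?case by simp
next
  case (step N)
  have "{2..Suc N} = insert (Suc N) {2..N}" using step by (simp add: atLeastAtMostSuc_conv)
  then have "(\<Sum>k=2..Suc N. real k) = real (Suc N) + (\<Sum>k=2..N. real k)" by simp
  moreover have "1/4 * (real (Suc N))^2 \<le> real (Suc N) + 1/4 * (real N)^2"
    by (simp add: power2_eq_square algebra_simps)
  ultimately show ?case using step by linarith
qed

lemma L_sum: "2 \<le> N \<Longrightarrow> 1/4 * (real N)^2 \<le> (\<Sum>k=2..N. measure lborel (Iint k))"
proof -
  assume N: "2 \<le> N"
  have "(\<Sum>k=2..N. measure lborel (Iint k)) = (\<Sum>k=2..N. real k)"
    by (rule sum.cong) (auto simp: Iint_def)
  then show ?thesis using sum_k_ge[OF N] by simp
qed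

lemma L_pt: "2 \<le> N \<Longrightarrow> k \<in> {2..N} \<Longrightarrow> x \<in> Iint k \<Longrightarrow> x < wN N x"
proof -
  assume N: "2 \<le> N" and k: "k \<in> {2..N}" and x: "x \<in> Iint k"
  have x1: "2^k \<le> x" "x < 2^k + real k" using x unfolding Iint_def by auto
  have "x < 2 * 2^k" using x1 k_lt_pow[of k] by linarith
  then have x2: "x < 2^(k+1)" by simp
  have "(2::real)^(k+1) \<le> 2^(N+1)" using k by (intro pow2_mono) simp
  then have xH: "x < 2^(N+1)" using x2 by linarith
  have "(0::real) \<le> 2^k" by simp
  then have "0 \<le> x" using x1 by linarith
  then have "wN N x = wbase N x" using wN_base[of x N] xH by simp
  moreover have "2^(k+1) \<le> wbase N x" using wbase_ge_I[of k N x] k x by simp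
  ultimately show ?thesis using x2 by simp
qed

lemma L_em:
  assumes N: "2 \<le> N"
  shows "ennreal (1/4 * (real N)^2) \<le> emeasure lborel {x. 1 < x \<and> x < wN N x}"
proof -
  have disj: "disjoint_family_on Iint {2..N}"
    unfolding disjoint_family_on_def
  proof (intro ballI impI)
    fix k k' assume k: "k \<in> {2..N}" "k' \<in> {2..N}" "k \<noteq> k'"
    have sub: "Iint i \<subseteq> {2^i..<2^(i+1)}" for i using k_lt_pow[of i] unfolding Iint_def by auto
    show "Iint k \<inter> Iint k' = {}"
    proof (cases "k < k'")
      case True
      then have "(2::real)^(k+1) \<le> 2^k'" by (intro pow2_mono) simp
      then show ?thesis using sub[of k] sub[of k'] by fastforce
    next
      case False
      then have "(2::real)^(k'+1) \<le> 2^k" using k by (intro pow2_mono) simp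
      then show ?thesis using sub[of k] sub[of k'] by fastforce
    qed
  qed
  have "ennreal (1/4 * (real N)^2) \<le> ennreal (\<Sum>k=2..N. real k)"
    using sum_k_ge[OF N] by (rule ennreal_leI)
  also have "\<dots> = (\<Sum>k=2..N. ennreal (real k))" by (rule sum_ennreal[symmetric]) simp
  also have "\<dots> = (\<Sum>k=2..N. emeasure lborel (Iint k))"
    by (rule sum.cong) (auto simp: Iint_def)
  also have "\<dots> = emeasure lborel (\<Union>k\<in>{2..N}. Iint k)"
  proof (rule sum_emeasure)
    show "Iint ` {2..N} \<subseteq> sets lborel" by (auto simp: Iint_def)
    show "disjoint_family_on Iint {2..N}" by (rule disj)
    show "finite {2..N}" by simp
  qed
  also have "\<dots> \<le> emeasure lborel {x. 1 < x \<and> x < wN N x}"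
  proof (rule emeasure_mono)
    show "(\<Union>k\<in>{2..N}. Iint k) \<subseteq> {x. 1 < x \<and> x < wN N x}"
    proof
      fix x assume "x \<in> (\<Union>k\<in>{2..N}. Iint k)"
      then obtain k where k: "k \<in> {2..N}" "x \<in> Iint k" by auto
      have "(1::real) < 2^k" using k by (simp add: one_less_power)
      moreover have "2^k \<le> x" using k unfolding Iint_def by auto
      ultimately have "1 < x" by linarith
      then show "x \<in> {x. 1 < x \<and> x < wN N x}" using L_pt[OF N k] by simp
    qed
    show "{x. 1 < x \<and> x < wN N x} \<in> sets lborel" by measurable
  qed
  finally show ?thesis .
qed

theorem mainTheorem4:
  shows "\<exists>c1 c2 c3::real. 0 < c1 \<and> c1 \<le> c2 \<and> 0 < c3 \<and>
    (\<forall>N::nat. N > 20 \<longrightarrow>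
      (LINT x:{0..1}|lborel. wN N x) = 1 \<and>
      ereal (c1 * real N) \<le> A1_const (wN N) \<and>
      A1_const (wN N) \<le> ereal (c2 * real N) \<and>
      (\<Sum>k=2..N. measure lborel (Iint k)) \<ge> c3 * (real N)^2 \<and>
      (\<forall>k\<in>{2..N}. \<forall>x\<in>Iint k. wN N x > x) \<and>
      emeasure lborel {x. 1 < x \<and> wN N x > x} \<ge> ennreal (c3 * (real N)^2))"
proof -
  have key: "(LINT x:{0..1}|lborel. wN N x) = 1 \<and>
      ereal (1 * real N) \<le> A1_const (wN N) \<and>
      A1_const (wN N) \<le> ereal (400 * real N) \<and>
      (\<Sum>k=2..N. measure lborel (Iint k)) \<ge> 1/4 * (real N)^2 \<and>
      (\<forall>k\<in>{2..N}. \<forall>x\<in>Iint k. wN N x > x) \<and>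
      emeasure lborel {x. 1 < x \<and> wN N x > x} \<ge> ennreal (1/4 * (real N)^2)" if "20 < N" for N :: nat
  proof -
    have N: "2 \<le> N" using that by simp
    show ?thesis using L_int01[OF N] L_lower[OF N] L_upper[OF N] L_sum[OF N] L_pt[OF N] L_em[OF N] by blast
  qed
  show ?thesis by (rule exI[of _ 1], rule exI[of _ 400], rule exI[of _ "1/4"]) (use key in simp)
qed


end
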